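(* Let $\epsilon,\delta\ge0$ be constants. Suppose that for every $n\ge3$ and every $\frac12$-cyclic point $x\in\mathbb{R}^{E_n}$, the vector $y$ defined by $y_e=\frac32-\epsilon$ for $e\in W_x$, $y_e=\frac34-\delta$ for $e\in H_x$, and $y_e=0$ for $e\notin E_x$ belongs to $\mathrm{TSP}(K_n)$. Then for every $n\ge3$ and every $\frac23$-uniform point $z\in\mathbb{R}^{E_n}$, we have $(\frac32-\frac\epsilon2-\delta)\,z\in\mathrm{TSP}(K_n)$.
   Context: $K_n$ is the complete graph on $V_n=\{1,\dots,n\}$ with edge set $E_n$; $\delta(U)$ denotes the set of edges with exactly one endpoint in $U$. $\mathrm{SUBT}(K_n)=\{x\in[0,1]^{E_n}: x(\delta(\{i\}))=2\ \forall i,\ x(\delta(U))\ge2\ \forall\,\emptyset\ne U\subsetneq V_n\}$. A tour of $K_n$ is a connected, spanning, Eulerian multigraph on $V_n$ with edges (possibly repeated) from $E_n$; $\mathrm{TSP}(K_n)$ is the convex hull of multiplicity vectors of tours. $G_x=(V_n,E_x)$, $E_x=\{e:x_e>0\}$. For $0<\theta\le\frac12$, a $\theta$-cyclic point is $x\in\mathrm{SUBT}(K_n)\cap\{0,\theta,1-\theta,1\}^{E_n}$ such that $G_x$ has maximum degree at most 3 and every vertex is incident to an edge $e$ with $x_e=1$; $W_x=\{e:x_e=1\}$, $H_x=\{e\in E_x:x_e<1\}$. A $\frac23$-uniform point is an $x\in\mathrm{SUBT}(K_n)$ with $x_e\in\{0,\frac23\}$ for all $e$. *)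

theory Defs
  imports Complex_Main
begin

(* Vertices of K_n: V_n = {1..n}; edges: 2-element subsets of V_n.
   Vectors in R^{E_n} are functions  nat set => real  vanishing outside E_n. *)

definition V :: "nat \<Rightarrow> nat set" where
  "V n = {1..n}"

definition E :: "nat \<Rightarrow> nat set set" where
  "E n = {e. e \<subseteq> V n \<and> card e = 2}"

definition cut :: "nat \<Rightarrow> nat set \<Rightarrow> nat set set" where
  "cut n U = {e \<in> E n. card (e \<inter> U) = 1}"

definition SUBT :: "nat \<Rightarrow> (nat set \<Rightarrow> real) set" where
  "SUBT n = {x. (\<forall>e. e \<notin> E n \<longrightarrow> x e = 0)
              \<and> (\<forall>e \<in> E n. 0 \<le> x e \<and> x e \<le> 1)
              \<and> (\<forall>i \<in> V n. sum x (cut n {i}) = 2)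
              \<and> (\<forall>U. U \<noteq> {} \<and> U \<subset> V n \<longrightarrow> sum x (cut n U) \<ge> 2)}"

(* A tour: multiplicity vector m on E_n (a multigraph) that is connected,
   spanning (on V_n) and Eulerian (every vertex has even degree). *)
definition adj :: "nat \<Rightarrow> (nat set \<Rightarrow> nat) \<Rightarrow> (nat \<times> nat) set" where
  "adj n m = {(u, v). {u, v} \<in> E n \<and> m {u, v} > 0}"

definition is_tour :: "nat \<Rightarrow> (nat set \<Rightarrow> nat) \<Rightarrow> bool" where
  "is_tour n m \<longleftrightarrow> (\<forall>e. e \<notin> E n \<longrightarrow> m e = 0)
     \<and> (\<forall>u \<in> V n. \<forall>v \<in> V n. (u, v) \<in> (adj n m)\<^sup>*)
     \<and> (\<forall>i \<in> V n. even (\<Sum>e \<in> cut n {i}. m e))"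

definition TSP :: "nat \<Rightarrow> (nat set \<Rightarrow> real) set" where
  "TSP n = {y. \<exists>k (c :: nat \<Rightarrow> real) (t :: nat \<Rightarrow> nat set \<Rightarrow> nat).
               (\<forall>i < k. 0 \<le> c i \<and> is_tour n (t i))
             \<and> (\<Sum>i<k. c i) = 1
             \<and> (\<forall>e. y e = (\<Sum>i<k. c i * real (t i e)))}"

definition cyclic_point :: "real \<Rightarrow> nat \<Rightarrow> (nat set \<Rightarrow> real) \<Rightarrow> bool" where
  "cyclic_point \<theta> n x \<longleftrightarrow> x \<in> SUBT n
     \<and> (\<forall>e \<in> E n. x e \<in> {0, \<theta>, 1 - \<theta>, 1})
     \<and> (\<forall>i \<in> V n. card {e \<in> cut n {i}. x e > 0} \<le> 3)
     \<and> (\<forall>i \<in> V n. \<exists>e \<in> cut n {i}. x e = 1)"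

definition two_thirds_uniform :: "nat \<Rightarrow> (nat set \<Rightarrow> real) \<Rightarrow> bool" where
  "two_thirds_uniform n z \<longleftrightarrow> z \<in> SUBT n \<and> (\<forall>e \<in> E n. z e \<in> {0, 2/3})"

end

theory Submission
  imports Defs
begin


definition graph :: "'v set \<Rightarrow> 'e set \<Rightarrow> ('e \<Rightarrow> 'v set) \<Rightarrow> bool" where
 "graph VV EE ends \<longleftrightarrow> finite VV \<and> finite EE \<and> (\<forall>e\<in>EE. ends e \<subseteq> VV \<and> card (ends e) = 2)"
definition inc :: "'e set \<Rightarrow> ('e \<Rightarrow> 'v set) \<Rightarrow> 'v \<Rightarrow> 'e set" where
 "inc EE ends v = {e\<in>EE. v \<in> ends e}"
definition dl :: "'e set \<Rightarrow> ('e \<Rightarrow> 'v set) \<Rightarrow> 'v set \<Rightarrow> 'e set" where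
 "dl EE ends U = {e\<in>EE. card (ends e \<inter> U) = 1}"
definition feas :: "'v set \<Rightarrow> 'e set \<Rightarrow> ('e \<Rightarrow> 'v set) \<Rightarrow> ('e \<Rightarrow> real) \<Rightarrow> bool" where
 "feas VV EE ends x \<longleftrightarrow> (\<forall>e\<in>EE. 0 \<le> x e) \<and> (\<forall>v\<in>VV. sum x (inc EE ends v) = 1)
    \<and> (\<forall>U. U \<subseteq> VV \<longrightarrow> odd (card U) \<longrightarrow> 1 \<le> sum x (dl EE ends U))"
definition pm :: "'v set \<Rightarrow> 'e set \<Rightarrow> ('e \<Rightarrow> 'v set) \<Rightarrow> 'e set \<Rightarrow> bool" where
 "pm VV EE ends M \<longleftrightarrow> M \<subseteq> EE \<and> (\<forall>v\<in>VV. card (inc EE ends v \<inter> M) = 1)"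
definition cpm :: "'v set \<Rightarrow> 'e set \<Rightarrow> ('e \<Rightarrow> 'v set) \<Rightarrow> ('e \<Rightarrow> real) \<Rightarrow> bool" where
 "cpm VV EE ends x \<longleftrightarrow> (\<exists>p. (\<forall>M. 0 \<le> p M) \<and> (\<forall>M\<in>Pow EE. p M \<noteq> 0 \<longrightarrow> pm VV EE ends M)
    \<and> sum p (Pow EE) = 1 \<and> (\<forall>e\<in>EE. x e = (\<Sum>M\<in>Pow EE. p M * of_bool (e\<in>M))))"

lemma cpm_push:
  fixes q :: "'z \<Rightarrow> real"
  assumes "finite EE" "finite Z" "\<forall>z\<in>Z. 0 \<le> q z" "sum q Z = 1" "\<forall>z\<in>Z. \<phi> z \<subseteq> EE"
    "\<forall>z\<in>Z. q z \<noteq> 0 \<longrightarrow> pm VV EE ends (\<phi> z)"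
    "\<forall>e\<in>EE. x e = (\<Sum>z\<in>Z. q z * of_bool (e \<in> \<phi> z))"
  shows "cpm VV EE ends x"
proof -
  define p where "p M = (\<Sum>z\<in>Z. if \<phi> z = M then q z else 0)" for M
  have key: "(\<Sum>M\<in>Pow EE. p M * g M) = (\<Sum>z\<in>Z. q z * g (\<phi> z))" for g :: "'a set \<Rightarrow> real"
  proof -
    have "(\<Sum>M\<in>Pow EE. p M * g M) = (\<Sum>M\<in>Pow EE. \<Sum>z\<in>Z. if \<phi> z = M then q z * g M else 0)"
      unfolding p_def sum_distrib_right by (intro sum.cong refl) (auto intro: sum.cong)
    also have "\<dots> = (\<Sum>z\<in>Z. \<Sum>M\<in>Pow EE. if \<phi> z = M then q z * g M else 0)" by (rule sum.swap)
    also have "\<dots> = (\<Sum>z\<in>Z. q z * g (\<phi> z))" 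
    proof (rule sum.cong[OF refl])
      fix z assume "z \<in> Z"
      then have "\<phi> z \<in> Pow EE" using assms(5) by auto
      have "(\<Sum>M\<in>Pow EE. if \<phi> z = M then q z * g M else 0) = (if \<phi> z \<in> Pow EE then q z * g (\<phi> z) else 0)"
        by (rule sum.delta') (use assms(1) in simp)
      then show "(\<Sum>M\<in>Pow EE. if \<phi> z = M then q z * g M else 0) = q z * g (\<phi> z)" using \<open>\<phi> z \<in> Pow EE\<close> by simp
    qed
    finally show ?thesis .
  qed
  show ?thesis unfolding cpm_def
  proof (intro exI conjI ballI allI impI)
    fix M show "0 \<le> p M" unfolding p_def using assms(3) by (auto intro: sum_nonneg)
  next
    fix M assume "M \<in> Pow EE" "p M \<noteq> 0"
    then obtain z where "z \<in> Z" "\<phi> z = M" "q z \<noteq> 0" unfolding p_def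
      by (smt (verit) sum.neutral)
    then show "pm VV EE ends M" using assms(6) by auto
  next
    show "sum p (Pow EE) = 1" using key[of "\<lambda>_. 1"] assms(4) by simp
  next
    fix e assume "e \<in> EE"
    then show "x e = (\<Sum>M\<in>Pow EE. p M * of_bool (e\<in>M))" using key[of "\<lambda>M. of_bool (e\<in>M)"] assms(7) by simp
  qed
qed

lemma inc_sum_swap:
  fixes f :: "'e \<Rightarrow> real"
  assumes "finite U" "finite EE"
  shows "(\<Sum>v\<in>U. sum f (inc EE ends v)) = (\<Sum>e\<in>EE. real (card (ends e \<inter> U)) * f e)"
proof -
  have "(\<Sum>v\<in>U. sum f (inc EE ends v)) = (\<Sum>v\<in>U. \<Sum>e\<in>EE. of_bool (v \<in> ends e) * f e)"
  proof (rule sum.cong[OF refl])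
    fix v
    have "sum f (inc EE ends v) = (\<Sum>e\<in>EE. if v \<in> ends e then f e else 0)"
      unfolding inc_def by (rule sum.inter_filter[OF assms(2)])
    also have "\<dots> = (\<Sum>e\<in>EE. of_bool (v \<in> ends e) * f e)" by (rule sum.cong) auto
    finally show "sum f (inc EE ends v) = (\<Sum>e\<in>EE. of_bool (v \<in> ends e) * f e)" .
  qed
  also have "\<dots> = (\<Sum>e\<in>EE. \<Sum>v\<in>U. of_bool (v \<in> ends e) * f e)" by (rule sum.swap)
  also have "\<dots> = (\<Sum>e\<in>EE. real (card (ends e \<inter> U)) * f e)"
  proof (rule sum.cong[OF refl])
    fix e
    have "(\<Sum>v\<in>U. of_bool (v \<in> ends e) * f e) = (\<Sum>v\<in>U. of_bool (v \<in> ends e)) * f e"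
      by (simp only: sum_distrib_right)
    also have "(\<Sum>v\<in>U. of_bool (v \<in> ends e) :: real) = real (card (U \<inter> {v. v \<in> ends e}))"
      using assms(1) by simp
    also have "U \<inter> {v. v \<in> ends e} = ends e \<inter> U" by auto
    finally show "(\<Sum>v\<in>U. of_bool (v \<in> ends e) * f e) = real (card (ends e \<inter> U)) * f e" .
  qed
  finally show ?thesis .
qed

lemma graph_card_ends: "graph VV EE ends \<Longrightarrow> e \<in> EE \<Longrightarrow> card (ends e) = 2"
  unfolding graph_def by auto
lemma graph_ends_sub: "graph VV EE ends \<Longrightarrow> e \<in> EE \<Longrightarrow> ends e \<subseteq> VV"
  unfolding graph_def by auto
lemma graph_finite: "graph VV EE ends \<Longrightarrow> finite VV" "graph VV EE ends \<Longrightarrow> finite EE"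
  unfolding graph_def by auto

lemma handshake:
  fixes f :: "'e \<Rightarrow> real"
  assumes "graph VV EE ends"
  shows "(\<Sum>v\<in>VV. sum f (inc EE ends v)) = 2 * sum f EE"
proof -
  have "(\<Sum>v\<in>VV. sum f (inc EE ends v)) = (\<Sum>e\<in>EE. real (card (ends e \<inter> VV)) * f e)"
    using assms by (intro inc_sum_swap) (auto simp: graph_def)
  also have "\<dots> = (\<Sum>e\<in>EE. 2 * f e)"
  proof (rule sum.cong[OF refl])
    fix e assume "e \<in> EE"
    then have "ends e \<inter> VV = ends e" using graph_ends_sub[OF assms] by auto
    then show "real (card (ends e \<inter> VV)) * f e = 2 * f e" using graph_card_ends[OF assms \<open>e\<in>EE\<close>] by simp
  qed
  finally show ?thesis by (simp add: sum_distrib_left)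
qed

lemma dl_single: "dl EE ends {v} = inc EE ends v"
  unfolding dl_def inc_def by (auto simp: Int_insert_right)

lemma card2_cases:
  assumes "card A = 2"
  obtains a b where "A = {a,b}" "a \<noteq> b"
  using assms by (auto simp: card_2_iff)

lemma dl_compl:
  assumes "graph VV EE ends" "U \<subseteq> VV"
  shows "dl EE ends (VV - U) = dl EE ends U"
proof -
  have "card (ends e \<inter> (VV - U)) = 1 \<longleftrightarrow> card (ends e \<inter> U) = 1" if eE: "e \<in> EE" for e
  proof -
    obtain a b where ab: "ends e = {a,b}" "a \<noteq> b" using graph_card_ends[OF assms(1) eE] unfolding card_2_iff by blast
    have "a \<in> VV" "b \<in> VV" using graph_ends_sub[OF assms(1) eE] ab by auto
    then show ?thesis using ab by (cases "a \<in> U"; cases "b \<in> U") (auto simp: Int_insert_left)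
  qed
  then show ?thesis unfolding dl_def by auto
qed

lemma card_ends_Int_le2: "graph VV EE ends \<Longrightarrow> e \<in> EE \<Longrightarrow> card (ends e \<inter> U) \<le> 2"
  by (metis card_mono finite.emptyI finite.insertI card2_cases graph_card_ends inf_le1)

lemma feas_even:
  assumes "graph VV EE ends" "feas VV EE ends x"
  shows "even (card VV)"
proof (rule ccontr)
  assume "odd (card VV)"
  then have "1 \<le> sum x (dl EE ends VV)" using assms(2) unfolding feas_def by auto
  moreover have "dl EE ends VV = {}"
  proof -
    have "card (ends e \<inter> VV) = 2" if "e \<in> EE" for e
      using graph_ends_sub[OF assms(1) that] graph_card_ends[OF assms(1) that] by (simp add: Int_absorb2)
    then show ?thesis unfolding dl_def by auto
  qed
  ultimately show False by simp
qed

lemma pm_mono: "pm VV EE' ends M \<Longrightarrow> EE' \<subseteq> EE \<Longrightarrow> pm VV EE ends M"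
  unfolding pm_def inc_def by (auto simp: Int_def) (smt (verit, best) Collect_cong subset_iff)

lemma inc_diff: "inc (EE - A) ends v = inc EE ends v - A" unfolding inc_def by auto
lemma dl_diff: "dl (EE - A) ends v = dl EE ends v - A" unfolding dl_def by auto

lemma sum_diff_zero: "finite S \<Longrightarrow> (x::'e\<Rightarrow>real) e0 = 0 \<Longrightarrow> sum x (S - {e0}) = sum x S"
  by (cases "e0 \<in> S") (simp_all add: sum_diff1)
lemma red_zero_feas:
  assumes "graph VV EE ends" "feas VV EE ends x" "x e0 = 0"
  shows "graph VV (EE - {e0}) ends" "feas VV (EE - {e0}) ends x"
proof -
  show "graph VV (EE - {e0}) ends" using assms(1) unfolding graph_def by auto
  have fin: "finite EE" using assms(1) by (simp add: graph_def)
  have "finite (inc EE ends v)" for v using fin unfolding inc_def by auto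
  moreover have "finite (dl EE ends U)" for U using fin unfolding dl_def by auto
  ultimately show "feas VV (EE - {e0}) ends x" using assms(2,3) unfolding feas_def inc_diff dl_diff
    by (simp add: sum_diff_zero)
qed

lemma red_zero_cpm:
  assumes "graph VV EE ends" "x e0 = 0" "cpm VV (EE - {e0}) ends x"
  shows "cpm VV EE ends x"
proof -
  obtain p where p: "\<forall>M. 0 \<le> p M" "\<forall>M\<in>Pow (EE - {e0}). p M \<noteq> 0 \<longrightarrow> pm VV (EE - {e0}) ends M"
    "sum p (Pow (EE - {e0})) = 1" "\<forall>e\<in>EE - {e0}. x e = (\<Sum>M\<in>Pow (EE - {e0}). p M * of_bool (e\<in>M))"
    using assms(3) unfolding cpm_def by blast
  have fin: "finite EE" using assms(1) by (simp add: graph_def)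
  show ?thesis
  proof (rule cpm_push[where Z="Pow (EE - {e0})" and q=p and \<phi>=id])
    show "\<forall>z\<in>Pow (EE - {e0}). p z \<noteq> 0 \<longrightarrow> pm VV EE ends (id z)" using p(2) pm_mono by fastforce
    show "\<forall>e\<in>EE. x e = (\<Sum>z\<in>Pow (EE - {e0}). p z * of_bool (e \<in> id z))"
    proof
      fix e assume "e \<in> EE"
      show "x e = (\<Sum>z\<in>Pow (EE - {e0}). p z * of_bool (e \<in> id z))"
      proof (cases "e = e0")
        case True
        have "(\<Sum>z\<in>Pow (EE - {e0}). p z * of_bool (e \<in> id z)) = 0"
          using True by (intro sum.neutral) auto
        then show ?thesis using True assms(2) by simp
      next
        case False
        then show ?thesis using p(4) \<open>e\<in>EE\<close> by simp
      qed
    qed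
  qed (use fin p in auto)
qed

lemma sum_prod_case:
  "(\<Sum>z\<in>A \<times> B. f (fst z) * g (snd z)) = sum f A * (sum g B :: real)"
  by (simp add: sum_product sum.cartesian_product case_prod_beta)

lemma cpm_get:
  assumes "cpm VV EE ends x"
  obtains p where "\<forall>M. 0 \<le> p M" "\<forall>M\<in>Pow EE. p M \<noteq> 0 \<longrightarrow> pm VV EE ends M"
    "sum p (Pow EE) = 1" "\<forall>e\<in>EE. x e = (\<Sum>M\<in>Pow EE. p M * of_bool (e\<in>M))"
  using assms unfolding cpm_def by blast

lemma comp_graph:
  assumes "graph VV EE ends" "R \<subseteq> VV" "F \<subseteq> EE" "\<forall>e\<in>F. ends e \<subseteq> R" "\<forall>e\<in>EE-F. ends e \<inter> R = {}"
  shows "graph (VV - R) (EE - F) ends" "graph R F ends"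
  using assms unfolding graph_def by (auto simp: finite_subset)

lemma comp_feas:
  assumes "graph VV EE ends" "feas VV EE ends x" "R \<subseteq> VV" "F \<subseteq> EE" "\<forall>e\<in>F. ends e \<subseteq> R" "\<forall>e\<in>EE-F. ends e \<inter> R = {}"
  shows "feas (VV - R) (EE - F) ends x"
proof -
  have i: "inc (EE - F) ends v = inc EE ends v" if "v \<in> VV - R" for v
    using that assms(5) unfolding inc_def by auto
  have d: "dl (EE - F) ends S = dl EE ends S" if "S \<subseteq> VV - R" for S
  proof -
    have "card (ends e \<inter> S) = 0" if "e \<in> F" for e
      using assms(5) that \<open>S \<subseteq> VV - R\<close> by (metis Diff_disjoint card.empty disjoint_iff inf.absorb_iff2 inf.orderE inf_left_commute subset_iff)
    then show ?thesis unfolding dl_def by fastforce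
  qed
  show ?thesis using assms(2) i d unfolding feas_def by auto
qed

lemma cpm_union:
  assumes "graph VV EE ends" "R \<subseteq> VV" "F \<subseteq> EE" "\<forall>e\<in>F. ends e \<subseteq> R" "\<forall>e\<in>EE-F. ends e \<inter> R = {}"
    "cpm (VV - R) (EE - F) ends x" "cpm R F ends x"
  shows "cpm VV EE ends x"
proof -
  obtain p1 where p1: "\<forall>M. 0 \<le> p1 M" "\<forall>M\<in>Pow (EE-F). p1 M \<noteq> 0 \<longrightarrow> pm (VV-R) (EE-F) ends M"
    "sum p1 (Pow (EE-F)) = 1" "\<forall>e\<in>EE-F. x e = (\<Sum>M\<in>Pow (EE-F). p1 M * of_bool (e\<in>M))"
    using assms(6) by (rule cpm_get)
  obtain p2 where p2: "\<forall>M. 0 \<le> p2 M" "\<forall>M\<in>Pow F. p2 M \<noteq> 0 \<longrightarrow> pm R F ends M"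
    "sum p2 (Pow F) = 1" "\<forall>e\<in>F. x e = (\<Sum>M\<in>Pow F. p2 M * of_bool (e\<in>M))"
    using assms(7) by (rule cpm_get)
  have fin: "finite EE" using assms(1) by (simp add: graph_def)
  then have finF: "finite F" using assms(3) finite_subset by auto
  show ?thesis
  proof (rule cpm_push[where Z="Pow (EE-F) \<times> Pow F" and q="\<lambda>z. p1 (fst z) * p2 (snd z)" and \<phi>="\<lambda>z. fst z \<union> snd z"])
    show "sum (\<lambda>z. p1 (fst z) * p2 (snd z)) (Pow (EE - F) \<times> Pow F) = 1"
      using p1(3) p2(3) by (simp add: sum_prod_case)
    show "\<forall>z\<in>Pow (EE - F) \<times> Pow F. p1 (fst z) * p2 (snd z) \<noteq> 0 \<longrightarrow> pm VV EE ends (fst z \<union> snd z)"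
    proof (intro ballI impI)
      fix z assume z: "z \<in> Pow (EE - F) \<times> Pow F" "p1 (fst z) * p2 (snd z) \<noteq> 0"
      obtain A B where AB: "z = (A,B)" by fastforce
      have A: "A \<subseteq> EE - F" "pm (VV-R) (EE-F) ends A" using z p1(2) AB by auto
      have B: "B \<subseteq> F" "pm R F ends B" using z p2(2) AB by auto
      have "card (inc EE ends v \<inter> (A \<union> B)) = 1" if "v \<in> VV" for v
      proof (cases "v \<in> R")
        case True
        then have "inc EE ends v \<inter> (A \<union> B) = inc F ends v \<inter> B"
          using A(1) B(1) assms(3,5) unfolding inc_def by auto
        then show ?thesis using B(2) True unfolding pm_def by auto
      next
        case False
        then have "inc EE ends v \<inter> (A \<union> B) = inc (EE-F) ends v \<inter> A"
          using A(1) B(1) assms(4) unfolding inc_def by auto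
        then show ?thesis using A(2) False that unfolding pm_def by auto
      qed
      then show "pm VV EE ends (fst z \<union> snd z)" using A(1) B(1) AB assms(3) unfolding pm_def by auto
    qed
    show "\<forall>e\<in>EE. x e = (\<Sum>z\<in>Pow (EE - F) \<times> Pow F. p1 (fst z) * p2 (snd z) * of_bool (e \<in> fst z \<union> snd z))"
    proof
      fix e assume "e \<in> EE"
      show "x e = (\<Sum>z\<in>Pow (EE - F) \<times> Pow F. p1 (fst z) * p2 (snd z) * of_bool (e \<in> fst z \<union> snd z))"
      proof (cases "e \<in> F")
        case True
        have "(\<Sum>z\<in>Pow (EE - F) \<times> Pow F. p1 (fst z) * p2 (snd z) * of_bool (e \<in> fst z \<union> snd z))
           = (\<Sum>z\<in>Pow (EE - F) \<times> Pow F. p1 (fst z) * (p2 (snd z) * of_bool (e \<in> snd z)))"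
          using True by (intro sum.cong refl) auto
        also have "\<dots> = sum p1 (Pow (EE-F)) * (\<Sum>M\<in>Pow F. p2 M * of_bool (e\<in>M))"
          by (rule sum_prod_case)
        finally show ?thesis using p1(3) p2(4) True by simp
      next
        case False
        have "(\<Sum>z\<in>Pow (EE - F) \<times> Pow F. p1 (fst z) * p2 (snd z) * of_bool (e \<in> fst z \<union> snd z))
           = (\<Sum>z\<in>Pow (EE - F) \<times> Pow F. (p1 (fst z) * of_bool (e \<in> fst z)) * p2 (snd z))"
          using False by (intro sum.cong refl) auto
        also have "\<dots> = (\<Sum>M\<in>Pow (EE-F). p1 M * of_bool (e\<in>M)) * sum p2 (Pow F)"
          by (rule sum_prod_case)
        finally show ?thesis using p2(3) p1(4) False \<open>e\<in>EE\<close> by simp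
      qed
    qed
  qed (use fin finF p1 p2 assms(3) in \<open>auto intro: mult_nonneg_nonneg\<close>)
qed

lemma parity_aux: "(t::nat) = a + b \<Longrightarrow> a = s - 1 \<Longrightarrow> b = v - u \<Longrightarrow> u \<le> v \<Longrightarrow> 0 < s \<Longrightarrow> even v \<Longrightarrow> odd u \<Longrightarrow> odd s \<Longrightarrow> odd t"
  by presburger

lemma cpm_single:
  assumes "ends e0 = R" "card R = 2" "x e0 = 1"
  shows "cpm R {e0} ends x"
proof (rule cpm_push[where Z="{e0}" and q="\<lambda>_. 1" and \<phi>="\<lambda>z. {z}"])
  show "\<forall>z\<in>{e0}. 1 \<noteq> 0 \<longrightarrow> pm R {e0} ends {z}"
    using assms unfolding pm_def inc_def by auto
qed (use assms in auto)

lemma cpm_digon: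
  assumes "e1 \<noteq> e2" "ends e1 = R" "ends e2 = R" "x e1 = 1/2" "x e2 = 1/2"
  shows "cpm R {e1,e2} ends x"
proof (rule cpm_push[where Z="{e1,e2}" and q="\<lambda>_. 1/2" and \<phi>="\<lambda>z. {z}"])
  show "\<forall>z\<in>{e1,e2}. 1/2 \<noteq> (0::real) \<longrightarrow> pm R {e1,e2} ends {z}"
    using assms unfolding pm_def inc_def by auto
qed (use assms in auto)

lemma graph_ends2:
  assumes "graph VV EE ends" "e \<in> EE"
  obtains a b where "ends e = {a,b}" "a \<noteq> b" "a \<in> VV" "b \<in> VV"
proof -
  obtain a b where ab: "ends e = {a,b}" "a \<noteq> b" using graph_card_ends[OF assms] unfolding card_2_iff by blast
  then show ?thesis using that graph_ends_sub[OF assms] by auto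
qed

definition cf :: "'v set \<Rightarrow> 'v \<Rightarrow> 'v \<Rightarrow> 'v" where "cf U w v = (if v \<in> U then v else w)"
definition cE :: "'e set \<Rightarrow> ('e \<Rightarrow> 'v set) \<Rightarrow> 'v set \<Rightarrow> 'e set" where "cE EE ends U = {e\<in>EE. ends e \<inter> U \<noteq> {}}"
definition cends :: "('e \<Rightarrow> 'v set) \<Rightarrow> 'v set \<Rightarrow> 'v \<Rightarrow> 'e \<Rightarrow> 'v set" where "cends ends U w e = cf U w ` ends e"

context
  fixes VV :: "'v set" and EE :: "'e set" and ends U w
  assumes G: "graph VV EE ends" and UV: "U \<subseteq> VV" and w: "w \<in> VV" "w \<notin> U"
begin

lemma contr_graph: "graph (insert w U) (cE EE ends U) (cends ends U w)"
  unfolding graph_def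
proof (intro conjI ballI)
  show "finite (insert w U)" using G UV finite_subset unfolding graph_def by auto
  show "finite (cE EE ends U)" using G unfolding graph_def cE_def by auto
  fix e assume e: "e \<in> cE EE ends U"
  then have eE: "e \<in> EE" unfolding cE_def by auto
  obtain a b where ab: "ends e = {a,b}" "a \<noteq> b" "a \<in> VV" "b \<in> VV" using G eE by (rule graph_ends2)
  have "a \<in> U \<or> b \<in> U" using e ab unfolding cE_def by auto
  then have "(a \<in> U \<and> b \<in> U \<and> cends ends U w e = {a,b}) \<or> (a \<in> U \<and> b \<notin> U \<and> cends ends U w e = {a,w})
     \<or> (a \<notin> U \<and> b \<in> U \<and> cends ends U w e = {w,b})"
    unfolding cends_def ab cf_def by auto
  then show "cends ends U w e \<subseteq> insert w U" "card (cends ends U w e) = 2"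
    using ab(2) w by (elim disjE conjE; auto simp: card_insert_if)+
qed

lemma contr_inc_U: "v \<in> U \<Longrightarrow> inc (cE EE ends U) (cends ends U w) v = inc EE ends v"
proof -
  assume v: "v \<in> U"
  have m: "v \<in> cf U w ` A \<longleftrightarrow> v \<in> A" for A
  proof
    assume "v \<in> cf U w ` A"
    then obtain a where "a \<in> A" "v = cf U w a" by blast
    then show "v \<in> A" using v w unfolding cf_def by (cases "a \<in> U") auto
  next
    assume "v \<in> A" then show "v \<in> cf U w ` A" using v unfolding cf_def by force
  qed
  show ?thesis unfolding inc_def cE_def cends_def m using v by blast
qed

lemma contr_inc_w: "inc (cE EE ends U) (cends ends U w) w = dl EE ends U"
proof -
  have "e \<in> inc (cE EE ends U) (cends ends U w) w \<longleftrightarrow> e \<in> dl EE ends U" for e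
  proof (cases "e \<in> EE")
    case True
    obtain a b where ab: "ends e = {a,b}" "a \<noteq> b" "a \<in> VV" "b \<in> VV" using G True by (rule graph_ends2)
    have cfw: "w = cf U w v \<longleftrightarrow> v \<notin> U" for v using w unfolding cf_def by auto
    have 1: "w \<in> cends ends U w e \<longleftrightarrow> (a \<notin> U \<or> b \<notin> U)"
    proof -
      have ce: "cends ends U w e = {cf U w a, cf U w b}" by (simp only: cends_def ab(1) image_insert image_empty)
      show ?thesis unfolding ce insert_iff empty_iff using cfw[of a] cfw[of b] by simp
    qed
    have 2: "ends e \<inter> U \<noteq> {} \<longleftrightarrow> (a \<in> U \<or> b \<in> U)" unfolding ab by auto
    have 3: "card (ends e \<inter> U) = 1 \<longleftrightarrow> (a \<in> U \<and> b \<notin> U) \<or> (a \<notin> U \<and> b \<in> U)"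
      using ab(2) by (cases "a \<in> U"; cases "b \<in> U") (simp_all add: ab(1) Int_insert_left)
    show ?thesis unfolding inc_def cE_def dl_def using True 1 2 3 by blast
  next
    case False then show ?thesis unfolding inc_def cE_def dl_def by auto
  qed
  then show ?thesis by auto
qed

lemma contr_dl:
  assumes S: "S \<subseteq> insert w U"
  shows "dl (cE EE ends U) (cends ends U w) S = dl EE ends (if w \<in> S then (S - {w}) \<union> (VV - U) else S)"
proof -
  define T where "T = (if w \<in> S then (S - {w}) \<union> (VV - U) else S)"
  have cfT: "cf U w v \<in> S \<longleftrightarrow> v \<in> T" if "v \<in> VV" for v
  proof (cases "v \<in> U")
    case True then show ?thesis using w unfolding cf_def T_def by auto
  next
    case False then show ?thesis using w S that unfolding cf_def T_def by auto
  qed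
  have "e \<in> dl (cE EE ends U) (cends ends U w) S \<longleftrightarrow> e \<in> dl EE ends T" for e
  proof (cases "e \<in> cE EE ends U")
    case True
    then have eE: "e \<in> EE" unfolding cE_def by auto
    obtain a b where ab: "ends e = {a,b}" "a \<noteq> b" "a \<in> VV" "b \<in> VV" using G eE by (rule graph_ends2)
    have im: "cends ends U w e \<inter> S = cf U w ` (ends e \<inter> T)"
      unfolding cends_def ab using cfT[OF ab(3)] cfT[OF ab(4)] by auto
    have "a \<in> U \<or> b \<in> U" using True ab unfolding cE_def by auto
    then have "inj_on (cf U w) (ends e)" using ab w unfolding cf_def inj_on_def by auto
    then have "inj_on (cf U w) (ends e \<inter> T)" by (rule inj_on_subset) auto
    then have "card (cends ends U w e \<inter> S) = card (ends e \<inter> T)" unfolding im by (rule card_image)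
    then show ?thesis using True eE unfolding dl_def by auto
  next
    case False
    have "e \<notin> dl EE ends T"
    proof
      assume e: "e \<in> dl EE ends T"
      then have eE: "e \<in> EE" unfolding dl_def by auto
      obtain a b where ab: "ends e = {a,b}" "a \<noteq> b" "a \<in> VV" "b \<in> VV" using G eE by (rule graph_ends2)
      have "a \<notin> U" "b \<notin> U" using False eE ab unfolding cE_def by auto
      show False
      proof (cases "w \<in> S")
        case True
        then have "ends e \<inter> T = ends e" using ab \<open>a \<notin> U\<close> \<open>b \<notin> U\<close> unfolding T_def by auto
        then show False using e ab unfolding dl_def by auto
      next
        case False
        then have "ends e \<inter> T = {}" using ab \<open>a \<notin> U\<close> \<open>b \<notin> U\<close> S unfolding T_def by auto
        then show False using e unfolding dl_def by auto
      qed
    qed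
    then show ?thesis using False unfolding dl_def by blast
  qed
  then have "dl (cE EE ends U) (cends ends U w) S = dl EE ends T" by blast
  then show ?thesis unfolding T_def .
qed

lemma contr_feas:
  assumes F: "feas VV EE ends x" and oddU: "odd (card U)" and tight: "sum x (dl EE ends U) = 1"
  shows "feas (insert w U) (cE EE ends U) (cends ends U w) x"
  unfolding feas_def
proof (intro conjI ballI allI impI)
  show "0 \<le> x e" if "e \<in> cE EE ends U" for e using that F unfolding feas_def cE_def by auto
  show "sum x (inc (cE EE ends U) (cends ends U w) v) = 1" if "v \<in> insert w U" for v
  proof (cases "v = w")
    case True then show ?thesis using contr_inc_w tight by simp
  next
    case False then have "v \<in> U" using that by auto
    then show ?thesis using contr_inc_U F UV unfolding feas_def by auto
  qed
  fix S assume S: "S \<subseteq> insert w U" "odd (card S)"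
  define T where "T = (if w \<in> S then (S - {w}) \<union> (VV - U) else S)"
  have finV: "finite VV" using G by (simp add: graph_def)
  have TV: "T \<subseteq> VV" using S UV w unfolding T_def by auto
  have oddT: "odd (card T)"
  proof (cases "w \<in> S")
    case True
    have finS: "finite S" using finV S(1) UV w finite_subset by (metis insert_subset)
    have "T = (S - {w}) \<union> (VV - U)" unfolding T_def using True by simp
    also have "card \<dots> = card (S - {w}) + card (VV - U)" using True S(1) finS finV
      by (intro card_Un_disjoint) auto
    finally have "card T = card (S - {w}) + card (VV - U)" .
    moreover have "card (S - {w}) = card S - 1" using True by simp
    moreover have "card (VV - U) = card VV - card U" using UV finV by (simp add: card_Diff_subset finite_subset)
    moreover have "card U \<le> card VV" using UV finV by (simp add: card_mono)
    moreover have "0 < card S" using True finS by (auto simp: card_gt_0_iff)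
    moreover have "even (card VV)" using feas_even[OF G F] .
    ultimately show ?thesis using oddU S(2) by (rule_tac parity_aux) (assumption)+
  next
    case False then show ?thesis using S(2) unfolding T_def by simp
  qed
  have "dl (cE EE ends U) (cends ends U w) S = dl EE ends T" unfolding T_def by (rule contr_dl[OF S(1)])
  then show "1 \<le> sum x (dl (cE EE ends U) (cends ends U w) S)" using F TV oddT unfolding feas_def by auto
qed

lemma contr_card: "card (insert w U) + card (cE EE ends U) < card VV + card EE" if "2 \<le> card (VV - U)"
proof -
  have finV: "finite VV" using G by (simp add: graph_def)
  have finE: "finite EE" using G by (simp add: graph_def)
  have "card (insert w U) = card U + 1" using w UV finV finite_subset by (simp add: finite_subset)
  moreover have "card (VV - U) = card VV - card U" using UV finV by (simp add: card_Diff_subset finite_subset)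
  moreover have "card (cE EE ends U) \<le> card EE" using finE unfolding cE_def by (intro card_mono) auto
  moreover have "card U \<le> card VV" using UV finV by (simp add: card_mono)
  ultimately show ?thesis using that by linarith
qed

end


lemma glue_H:
  fixes p1 p2 :: "'a \<Rightarrow> real" and c :: "'f \<Rightarrow> real"
  assumes "finite D" "finite P1" "finite P2"
  shows "(\<Sum>z\<in>P1\<times>P2. p1 (fst z) * p2 (snd z) * (\<Sum>f\<in>D. c f * h1 f (fst z) * h2 f (snd z)))
    = (\<Sum>f\<in>D. c f * (\<Sum>A\<in>P1. p1 A * h1 f A) * (\<Sum>B\<in>P2. p2 B * h2 f B))"
proof -
  have "(\<Sum>z\<in>P1\<times>P2. p1 (fst z) * p2 (snd z) * (\<Sum>f\<in>D. c f * h1 f (fst z) * h2 f (snd z)))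
     = (\<Sum>z\<in>P1\<times>P2. \<Sum>f\<in>D. c f * ((p1 (fst z) * h1 f (fst z)) * (p2 (snd z) * h2 f (snd z))))"
    by (intro sum.cong refl) (simp add: sum_distrib_left algebra_simps)
  also have "\<dots> = (\<Sum>f\<in>D. \<Sum>z\<in>P1\<times>P2. c f * ((p1 (fst z) * h1 f (fst z)) * (p2 (snd z) * h2 f (snd z))))"
    by (rule sum.swap)
  also have "\<dots> = (\<Sum>f\<in>D. c f * (\<Sum>A\<in>P1. p1 A * h1 f A) * (\<Sum>B\<in>P2. p2 B * h2 f B))"
  proof (rule sum.cong[OF refl])
    fix f
    have "(\<Sum>z\<in>P1\<times>P2. c f * ((p1 (fst z) * h1 f (fst z)) * (p2 (snd z) * h2 f (snd z))))
       = c f * (\<Sum>z\<in>P1\<times>P2. (p1 (fst z) * h1 f (fst z)) * (p2 (snd z) * h2 f (snd z)))"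
      by (simp add: sum_distrib_left)
    also have "(\<Sum>z\<in>P1\<times>P2. (p1 (fst z) * h1 f (fst z)) * (p2 (snd z) * h2 f (snd z)))
       = (\<Sum>A\<in>P1. p1 A * h1 f A) * (\<Sum>B\<in>P2. p2 B * h2 f B)"
      by (rule sum_prod_case)
    finally show "(\<Sum>z\<in>P1\<times>P2. c f * ((p1 (fst z) * h1 f (fst z)) * (p2 (snd z) * h2 f (snd z))))
       = c f * (\<Sum>A\<in>P1. p1 A * h1 f A) * (\<Sum>B\<in>P2. p2 B * h2 f B)" by simp
  qed
  finally show ?thesis .
qed


lemma cut_parts:
  assumes G: "graph VV EE ends" and UV: "U \<subseteq> VV"
  shows "cE EE ends U \<inter> cE EE ends (VV - U) = dl EE ends U" "cE EE ends U \<union> cE EE ends (VV - U) = EE"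
proof -
  have "e \<in> cE EE ends U \<inter> cE EE ends (VV - U) \<longleftrightarrow> e \<in> dl EE ends U" for e
  proof (cases "e \<in> EE")
    case True
    obtain a b where ab: "ends e = {a,b}" "a \<noteq> b" "a \<in> VV" "b \<in> VV" using G True by (rule graph_ends2)
    have 3: "card (ends e \<inter> U) = 1 \<longleftrightarrow> (a \<in> U \<and> b \<notin> U) \<or> (a \<notin> U \<and> b \<in> U)"
      using ab(2) by (cases "a \<in> U"; cases "b \<in> U") (simp_all add: ab(1) Int_insert_left)
    show ?thesis unfolding cE_def dl_def using True 3 ab(1,3,4) by auto
  next
    case False then show ?thesis unfolding cE_def dl_def by auto
  qed
  then show "cE EE ends U \<inter> cE EE ends (VV - U) = dl EE ends U" by blast
  have "e \<in> cE EE ends U \<union> cE EE ends (VV - U)" if eE: "e \<in> EE" for e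
  proof -
    obtain a b where ab: "ends e = {a,b}" "a \<noteq> b" "a \<in> VV" "b \<in> VV" using G eE by (rule graph_ends2)
    show ?thesis unfolding cE_def using eE ab(1,3) by auto
  qed
  then show "cE EE ends U \<union> cE EE ends (VV - U) = EE" unfolding cE_def by auto
qed

lemma glue:
  assumes G: "graph VV EE ends" and pos: "\<forall>e\<in>EE. 0 < x e" and UV: "U \<subseteq> VV" and w: "w \<in> VV" "w \<notin> U" and u0: "u0 \<in> U"
    and tight: "sum x (dl EE ends U) = 1"
    and c1: "cpm (insert w U) (cE EE ends U) (cends ends U w) x"
    and c2: "cpm (insert u0 (VV - U)) (cE EE ends (VV - U)) (cends ends (VV - U) u0) x"
  shows "cpm VV EE ends x"
proof -
  define E1 where "E1 = cE EE ends U"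
  define E2 where "E2 = cE EE ends (VV - U)"
  define D where "D = dl EE ends U"
  define en1 where "en1 = cends ends U w"
  define en2 where "en2 = cends ends (VV - U) u0"
  obtain p1 where p1: "\<forall>M. 0 \<le> p1 M" "\<forall>M\<in>Pow E1. p1 M \<noteq> 0 \<longrightarrow> pm (insert w U) E1 en1 M"
    "sum p1 (Pow E1) = 1" "\<forall>e\<in>E1. x e = (\<Sum>M\<in>Pow E1. p1 M * of_bool (e\<in>M))"
    using c1 unfolding E1_def en1_def by (rule cpm_get)
  obtain p2 where p2: "\<forall>M. 0 \<le> p2 M" "\<forall>M\<in>Pow E2. p2 M \<noteq> 0 \<longrightarrow> pm (insert u0 (VV - U)) E2 en2 M"
    "sum p2 (Pow E2) = 1" "\<forall>e\<in>E2. x e = (\<Sum>M\<in>Pow E2. p2 M * of_bool (e\<in>M))"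
    using c2 unfolding E2_def en2_def by (rule cpm_get)
  have u0V: "u0 \<in> VV" "u0 \<notin> VV - U" using u0 UV by auto
  have inc1U: "inc E1 en1 v = inc EE ends v" if "v \<in> U" for v
    unfolding E1_def en1_def using contr_inc_U[OF G UV w that] .
  have inc1w: "inc E1 en1 w = D"
    unfolding E1_def en1_def D_def using contr_inc_w[OF G UV w] .
  have inc2U: "inc E2 en2 v = inc EE ends v" if "v \<in> VV - U" for v
    unfolding E2_def en2_def using contr_inc_U[OF G _ u0V that] by auto
  have inc2u: "inc E2 en2 u0 = D"
    unfolding E2_def en2_def D_def using contr_inc_w[OF G _ u0V] dl_compl[OF G UV] by auto
  have E12: "E1 \<inter> E2 = D" "E1 \<union> E2 = EE" unfolding E1_def E2_def D_def using cut_parts[OF G UV] by auto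
  have finE: "finite EE" using G by (simp add: graph_def)
  have finE1: "finite E1" "finite E2" "finite D" using E12 finE by (metis finite_Un, metis finite_Un, metis finite_Int finite_Un)
  have D1: "card (D \<inter> A) = 1" if "A \<in> Pow E1" "p1 A \<noteq> 0" for A
  proof -
    have "pm (insert w U) E1 en1 A" using p1(2) that by auto
    then have "card (inc E1 en1 w \<inter> A) = 1" unfolding pm_def by auto
    then show ?thesis using inc1w by simp
  qed
  have D2: "card (D \<inter> B) = 1" if "B \<in> Pow E2" "p2 B \<noteq> 0" for B
  proof -
    have "pm (insert u0 (VV - U)) E2 en2 B" using p2(2) that by auto
    then have "card (inc E2 en2 u0 \<inter> B) = 1" unfolding pm_def by auto
    then show ?thesis using inc2u by simp
  qed
  have xD: "x f = (\<Sum>M\<in>Pow E1. p1 M * of_bool (f\<in>M))" "x f = (\<Sum>M\<in>Pow E2. p2 M * of_bool (f\<in>M))"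
    "0 < x f" if "f \<in> D" for f
    using p1(4) p2(4) E12 pos that by auto
  define g where "g A B = (\<Sum>f\<in>D. (1 / x f) * of_bool (f\<in>A) * of_bool (f\<in>B))" for A B
  have g_nonneg: "0 \<le> g A B" for A B unfolding g_def using xD(3) by (intro sum_nonneg) (auto intro: less_imp_le)
  have total: "(\<Sum>z\<in>Pow E1 \<times> Pow E2. p1 (fst z) * p2 (snd z) * g (fst z) (snd z)) = 1"
  proof -
    have "(\<Sum>z\<in>Pow E1 \<times> Pow E2. p1 (fst z) * p2 (snd z) * g (fst z) (snd z))
      = (\<Sum>f\<in>D. (1 / x f) * (\<Sum>A\<in>Pow E1. p1 A * of_bool (f\<in>A)) * (\<Sum>B\<in>Pow E2. p2 B * of_bool (f\<in>B)))"
      unfolding g_def by (rule glue_H) (use finE1 in auto)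
    also have "\<dots> = (\<Sum>f\<in>D. x f)"
    proof (rule sum.cong[OF refl])
      fix f assume "f \<in> D"
      then show "(1 / x f) * (\<Sum>A\<in>Pow E1. p1 A * of_bool (f\<in>A)) * (\<Sum>B\<in>Pow E2. p2 B * of_bool (f\<in>B)) = x f"
        using xD[OF \<open>f\<in>D\<close>] by (simp only: ) (simp add: field_simps)
    qed
    finally show ?thesis using tight unfolding D_def by simp
  qed
  have sumA: "(\<Sum>f\<in>D. (1 / x f) * (\<Sum>A\<in>Pow E1. p1 A * (of_bool (f\<in>A) * of_bool (e\<in>A))) * x f)
      = (\<Sum>A\<in>Pow E1. p1 A * of_bool (e\<in>A))" for e
  proof -
    have "(\<Sum>f\<in>D. (1 / x f) * (\<Sum>A\<in>Pow E1. p1 A * (of_bool (f\<in>A) * of_bool (e\<in>A))) * x f)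
        = (\<Sum>f\<in>D. \<Sum>A\<in>Pow E1. p1 A * (of_bool (f\<in>A) * of_bool (e\<in>A)))"
    proof (rule sum.cong[OF refl])
      fix f assume "f \<in> D"
      then have "x f \<noteq> 0" using xD(3) by force
      then show "(1 / x f) * (\<Sum>A\<in>Pow E1. p1 A * (of_bool (f\<in>A) * of_bool (e\<in>A))) * x f
        = (\<Sum>A\<in>Pow E1. p1 A * (of_bool (f\<in>A) * of_bool (e\<in>A)))" by simp
    qed
    also have "\<dots> = (\<Sum>A\<in>Pow E1. \<Sum>f\<in>D. p1 A * (of_bool (f\<in>A) * of_bool (e\<in>A)))" by (rule sum.swap)
    also have "\<dots> = (\<Sum>A\<in>Pow E1. p1 A * of_bool (e\<in>A))"
    proof (rule sum.cong[OF refl])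
      fix A assume A: "A \<in> Pow E1"
      have "(\<Sum>f\<in>D. p1 A * (of_bool (f\<in>A) * of_bool (e\<in>A))) = p1 A * of_bool (e\<in>A) * (\<Sum>f\<in>D. of_bool (f\<in>A))"
        by (simp add: sum_distrib_left sum_distrib_right algebra_simps del: sum_of_bool_eq sum_mult_of_bool_eq sum_of_bool_mult_eq)
      also have "(\<Sum>f\<in>D. of_bool (f\<in>A) :: real) = real (card (D \<inter> A))" using finE1(3) by (simp add: Collect_mem_eq)
      finally show "(\<Sum>f\<in>D. p1 A * (of_bool (f\<in>A) * of_bool (e\<in>A))) = p1 A * of_bool (e\<in>A)"
        using D1[OF A] by (cases "p1 A = 0") auto
    qed
    finally show ?thesis .
  qed
  have sumB: "(\<Sum>f\<in>D. (1 / x f) * x f * (\<Sum>B\<in>Pow E2. p2 B * (of_bool (f\<in>B) * of_bool (e\<in>B))))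
      = (\<Sum>B\<in>Pow E2. p2 B * of_bool (e\<in>B))" for e
  proof -
    have "(\<Sum>f\<in>D. (1 / x f) * x f * (\<Sum>B\<in>Pow E2. p2 B * (of_bool (f\<in>B) * of_bool (e\<in>B))))
        = (\<Sum>f\<in>D. \<Sum>B\<in>Pow E2. p2 B * (of_bool (f\<in>B) * of_bool (e\<in>B)))"
    proof (rule sum.cong[OF refl])
      fix f assume "f \<in> D"
      then have "x f \<noteq> 0" using xD(3) by force
      then show "(1 / x f) * x f * (\<Sum>B\<in>Pow E2. p2 B * (of_bool (f\<in>B) * of_bool (e\<in>B)))
        = (\<Sum>B\<in>Pow E2. p2 B * (of_bool (f\<in>B) * of_bool (e\<in>B)))" by simp
    qed
    also have "\<dots> = (\<Sum>B\<in>Pow E2. \<Sum>f\<in>D. p2 B * (of_bool (f\<in>B) * of_bool (e\<in>B)))" by (rule sum.swap)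
    also have "\<dots> = (\<Sum>B\<in>Pow E2. p2 B * of_bool (e\<in>B))"
    proof (rule sum.cong[OF refl])
      fix B assume B: "B \<in> Pow E2"
      have "(\<Sum>f\<in>D. p2 B * (of_bool (f\<in>B) * of_bool (e\<in>B))) = p2 B * of_bool (e\<in>B) * (\<Sum>f\<in>D. of_bool (f\<in>B))"
        by (simp add: sum_distrib_left sum_distrib_right algebra_simps del: sum_of_bool_eq sum_mult_of_bool_eq sum_of_bool_mult_eq)
      also have "(\<Sum>f\<in>D. of_bool (f\<in>B) :: real) = real (card (D \<inter> B))" using finE1(3) by (simp add: Collect_mem_eq)
      finally show "(\<Sum>f\<in>D. p2 B * (of_bool (f\<in>B) * of_bool (e\<in>B))) = p2 B * of_bool (e\<in>B)"
        using D2[OF B] by (cases "p2 B = 0") auto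
    qed
    finally show ?thesis .
  qed
  show ?thesis
  proof (rule cpm_push[where Z="Pow E1 \<times> Pow E2" and q="\<lambda>z. p1 (fst z) * p2 (snd z) * g (fst z) (snd z)"
        and \<phi>="\<lambda>z. fst z \<union> snd z"])
    show "finite EE" by (rule finE)
    show "finite (Pow E1 \<times> Pow E2)" using finE1 by auto
    show "\<forall>z\<in>Pow E1 \<times> Pow E2. 0 \<le> p1 (fst z) * p2 (snd z) * g (fst z) (snd z)"
      using p1(1) p2(1) g_nonneg by auto
    show "sum (\<lambda>z. p1 (fst z) * p2 (snd z) * g (fst z) (snd z)) (Pow E1 \<times> Pow E2) = 1" by (rule total)
    show "\<forall>z\<in>Pow E1 \<times> Pow E2. fst z \<union> snd z \<subseteq> EE" using E12 by auto
    show "\<forall>z\<in>Pow E1 \<times> Pow E2. p1 (fst z) * p2 (snd z) * g (fst z) (snd z) \<noteq> 0 \<longrightarrow> pm VV EE ends (fst z \<union> snd z)"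
    proof (intro ballI impI)
      fix z assume z: "z \<in> Pow E1 \<times> Pow E2" "p1 (fst z) * p2 (snd z) * g (fst z) (snd z) \<noteq> 0"
      obtain A B where AB: "z = (A,B)" by fastforce
      have A: "A \<in> Pow E1" "p1 A \<noteq> 0" and B: "B \<in> Pow E2" "p2 B \<noteq> 0" and gAB: "g A B \<noteq> 0"
        using z AB by auto
      obtain f where f: "f \<in> D" "f \<in> A" "f \<in> B"
      proof -
        have "\<exists>f\<in>D. f \<in> A \<and> f \<in> B"
        proof (rule ccontr)
          assume "\<not> (\<exists>f\<in>D. f \<in> A \<and> f \<in> B)"
          then have "g A B = 0" unfolding g_def by (intro sum.neutral) auto
          then show False using gAB by simp
        qed
        then show ?thesis using that by blast
      qed
      have pmA: "pm (insert w U) E1 en1 A" using p1(2) A by auto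
      have pmB: "pm (insert u0 (VV - U)) E2 en2 B" using p2(2) B by auto
      have DA: "D \<inter> A = {f}" using D1[OF A] f by (metis card_1_singletonE IntI singletonD)
      have DB: "D \<inter> B = {f}" using D2[OF B] f by (metis card_1_singletonE IntI singletonD)
      have "card (inc EE ends v \<inter> (A \<union> B)) = 1" if v: "v \<in> VV" for v
      proof (cases "v \<in> U")
        case True
        have "inc EE ends v \<inter> (A \<union> B) = inc E1 en1 v \<inter> A"
        proof
          show "inc E1 en1 v \<inter> A \<subseteq> inc EE ends v \<inter> (A \<union> B)" using inc1U[OF True] by auto
          show "inc EE ends v \<inter> (A \<union> B) \<subseteq> inc E1 en1 v \<inter> A"
          proof
            fix e assume e: "e \<in> inc EE ends v \<inter> (A \<union> B)"
            have "e \<in> A"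
            proof (cases "e \<in> B")
              case True
              have "e \<in> E1" using e \<open>v \<in> U\<close> unfolding E1_def cE_def inc_def by auto
              moreover have "e \<in> E2" using True B by auto
              ultimately have "e \<in> D \<inter> B" using E12 True by auto
              then show ?thesis using DB f by auto
            next
              case False then show ?thesis using e by auto
            qed
            then show "e \<in> inc E1 en1 v \<inter> A" using e inc1U[OF \<open>v\<in>U\<close>] by auto
          qed
        qed
        then show ?thesis using pmA True unfolding pm_def by auto
      next
        case False
        then have vU: "v \<in> VV - U" using v by auto
        have "inc EE ends v \<inter> (A \<union> B) = inc E2 en2 v \<inter> B"
        proof
          show "inc E2 en2 v \<inter> B \<subseteq> inc EE ends v \<inter> (A \<union> B)" using inc2U[OF vU] by auto
          show "inc EE ends v \<inter> (A \<union> B) \<subseteq> inc E2 en2 v \<inter> B"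
          proof
            fix e assume e: "e \<in> inc EE ends v \<inter> (A \<union> B)"
            have "e \<in> B"
            proof (cases "e \<in> A")
              case True
              have "e \<in> E2" using e vU unfolding E2_def cE_def inc_def by auto
              moreover have "e \<in> E1" using True A by auto
              ultimately have "e \<in> D \<inter> A" using E12 True by auto
              then show ?thesis using DA f by auto
            next
              case False then show ?thesis using e by auto
            qed
            then show "e \<in> inc E2 en2 v \<inter> B" using e inc2U[OF vU] by auto
          qed
        qed
        then show ?thesis using pmB vU unfolding pm_def by auto
      qed
      then show "pm VV EE ends (fst z \<union> snd z)" using A B E12 AB unfolding pm_def by auto
    qed
    show "\<forall>e\<in>EE. x e = (\<Sum>z\<in>Pow E1 \<times> Pow E2. p1 (fst z) * p2 (snd z) * g (fst z) (snd z) * of_bool (e \<in> fst z \<union> snd z))"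
    proof
      fix e assume eE: "e \<in> EE"
      let ?L = "(\<Sum>z\<in>Pow E1 \<times> Pow E2. p1 (fst z) * p2 (snd z) * g (fst z) (snd z) * of_bool (e \<in> fst z \<union> snd z))"
      consider "e \<in> D" | "e \<notin> D" "e \<in> E1" | "e \<notin> D" "e \<in> E2" using eE E12 by blast
      then show "x e = ?L"
      proof cases
        case 1
        have "?L = (\<Sum>z\<in>Pow E1 \<times> Pow E2. p1 (fst z) * p2 (snd z) *
              (\<Sum>f\<in>D. (of_bool (f = e) / x f) * of_bool (f\<in>fst z) * of_bool (f\<in>snd z)))"
        proof (rule sum.cong[OF refl])
          fix z assume z: "z \<in> Pow E1 \<times> Pow E2"
          obtain A B where AB: "z = (A,B)" by fastforce
          have A: "A \<in> Pow E1" and B: "B \<in> Pow E2" using z AB by auto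
          show "p1 (fst z) * p2 (snd z) * g (fst z) (snd z) * of_bool (e \<in> fst z \<union> snd z) =
              p1 (fst z) * p2 (snd z) * (\<Sum>f\<in>D. (of_bool (f = e) / x f) * of_bool (f\<in>fst z) * of_bool (f\<in>snd z))"
          proof (cases "p1 A = 0 \<or> p2 B = 0")
            case True then show ?thesis using AB by auto
          next
            case False
            have "g A B * of_bool (e \<in> A \<union> B) = (\<Sum>f\<in>D. (of_bool (f = e) / x f) * of_bool (f\<in>A) * of_bool (f\<in>B))"
              unfolding g_def sum_distrib_right
            proof (rule sum.cong[OF refl])
              fix f assume fD: "f \<in> D"
              show "1 / x f * of_bool (f \<in> A) * of_bool (f \<in> B) * of_bool (e \<in> A \<union> B) =
                  of_bool (f = e) / x f * of_bool (f \<in> A) * of_bool (f \<in> B)"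
              proof (cases "f \<in> A \<and> f \<in> B")
                case True
                have DA: "D \<inter> A = {f}" using D1[OF A] True fD False by (metis card_1_singletonE IntI singletonD)
                have DB: "D \<inter> B = {f}" using D2[OF B] True fD False by (metis card_1_singletonE IntI singletonD)
                have "e \<in> A \<union> B \<longleftrightarrow> f = e" using DA DB 1 True by (auto simp: set_eq_iff)
                then show ?thesis using True by simp
              next
                case False then show ?thesis by auto
              qed
            qed
            then show ?thesis using AB by (simp add: mult.assoc)
          qed
        qed
        also have "\<dots> = (\<Sum>f\<in>D. (of_bool (f = e) / x f) * (\<Sum>A\<in>Pow E1. p1 A * of_bool (f\<in>A)) * (\<Sum>B\<in>Pow E2. p2 B * of_bool (f\<in>B)))"
          by (rule glue_H) (use finE1 in auto)
        also have "\<dots> = (\<Sum>f\<in>D. if f = e then x e else 0)"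
        proof (rule sum.cong[OF refl])
          fix f assume "f \<in> D"
          then show "(of_bool (f = e) / x f) * (\<Sum>A\<in>Pow E1. p1 A * of_bool (f\<in>A)) * (\<Sum>B\<in>Pow E2. p2 B * of_bool (f\<in>B))
              = (if f = e then x e else 0)"
          proof -
            have s1: "(\<Sum>A\<in>Pow E1. p1 A * of_bool (f\<in>A)) = x f" "(\<Sum>B\<in>Pow E2. p2 B * of_bool (f\<in>B)) = x f"
              using xD(1,2)[OF \<open>f\<in>D\<close>] by simp_all
            have "x f \<noteq> 0" using xD(3)[OF \<open>f\<in>D\<close>] by simp
            then show ?thesis unfolding s1 by (cases "f = e") simp_all
          qed
        qed
        also have "\<dots> = x e" using 1 finE1(3) by simp
        finally show ?thesis by simp
      next
        case 2
        have "e \<notin> E2" using 2 E12 by auto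
        have "?L = (\<Sum>z\<in>Pow E1 \<times> Pow E2. p1 (fst z) * p2 (snd z) *
              (\<Sum>f\<in>D. (1 / x f) * (of_bool (f\<in>fst z) * of_bool (e\<in>fst z)) * of_bool (f\<in>snd z)))"
        proof (rule sum.cong[OF refl])
          fix z assume z: "z \<in> Pow E1 \<times> Pow E2"
          then have "e \<notin> snd z" using \<open>e \<notin> E2\<close> by auto
          then show "p1 (fst z) * p2 (snd z) * g (fst z) (snd z) * of_bool (e \<in> fst z \<union> snd z) =
              p1 (fst z) * p2 (snd z) * (\<Sum>f\<in>D. (1 / x f) * (of_bool (f\<in>fst z) * of_bool (e\<in>fst z)) * of_bool (f\<in>snd z))"
            unfolding g_def by (simp add: sum_distrib_right sum_distrib_left algebra_simps
                del: sum_of_bool_eq sum_mult_of_bool_eq sum_of_bool_mult_eq)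
        qed
        also have "\<dots> = (\<Sum>f\<in>D. (1 / x f) * (\<Sum>A\<in>Pow E1. p1 A * (of_bool (f\<in>A) * of_bool (e\<in>A))) * (\<Sum>B\<in>Pow E2. p2 B * of_bool (f\<in>B)))"
          by (rule glue_H) (use finE1 in auto)
        also have "\<dots> = (\<Sum>f\<in>D. (1 / x f) * (\<Sum>A\<in>Pow E1. p1 A * (of_bool (f\<in>A) * of_bool (e\<in>A))) * x f)"
          by (intro sum.cong refl) (use xD in auto)
        also have "\<dots> = (\<Sum>A\<in>Pow E1. p1 A * of_bool (e\<in>A))" by (rule sumA)
        finally show ?thesis using p1(4) 2 by simp
      next
        case 3
        have "e \<notin> E1" using 3 E12 by auto
        have "?L = (\<Sum>z\<in>Pow E1 \<times> Pow E2. p1 (fst z) * p2 (snd z) *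
              (\<Sum>f\<in>D. (1 / x f) * of_bool (f\<in>fst z) * (of_bool (f\<in>snd z) * of_bool (e\<in>snd z))))"
        proof (rule sum.cong[OF refl])
          fix z assume z: "z \<in> Pow E1 \<times> Pow E2"
          then have "e \<notin> fst z" using \<open>e \<notin> E1\<close> by auto
          then show "p1 (fst z) * p2 (snd z) * g (fst z) (snd z) * of_bool (e \<in> fst z \<union> snd z) =
              p1 (fst z) * p2 (snd z) * (\<Sum>f\<in>D. (1 / x f) * of_bool (f\<in>fst z) * (of_bool (f\<in>snd z) * of_bool (e\<in>snd z)))"
            unfolding g_def by (simp add: sum_distrib_right sum_distrib_left algebra_simps
                del: sum_of_bool_eq sum_mult_of_bool_eq sum_of_bool_mult_eq)
        qed
        also have "\<dots> = (\<Sum>f\<in>D. (1 / x f) * (\<Sum>A\<in>Pow E1. p1 A * of_bool (f\<in>A)) * (\<Sum>B\<in>Pow E2. p2 B * (of_bool (f\<in>B) * of_bool (e\<in>B))))"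
          by (rule glue_H) (use finE1 in auto)
        also have "\<dots> = (\<Sum>f\<in>D. (1 / x f) * x f * (\<Sum>B\<in>Pow E2. p2 B * (of_bool (f\<in>B) * of_bool (e\<in>B))))"
          by (intro sum.cong refl) (use xD in auto)
        also have "\<dots> = (\<Sum>B\<in>Pow E2. p2 B * of_bool (e\<in>B))" by (rule sumB)
        finally show ?thesis using p2(4) 3 by simp
      qed
    qed
  qed
qed


lemma kernel_exists:
  fixes a :: "'v \<Rightarrow> 'e \<Rightarrow> real"
  assumes "finite VV" "finite EE" "card VV < card EE"
  shows "\<exists>d. (\<exists>e\<in>EE. d e \<noteq> 0) \<and> (\<forall>v\<in>VV. (\<Sum>e\<in>EE. a v e * d e) = 0)"
  using assms
proof (induction VV arbitrary: EE a rule: finite_induct)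
  case empty
  then have "EE \<noteq> {}" by auto
  then show ?case by (intro exI[of _ "\<lambda>_. 1"]) auto
next
  case (insert v0 VV)
  show ?case
  proof (cases "\<forall>e\<in>EE. a v0 e = 0")
    case True
    have "card VV < card EE" using insert by simp
    then obtain d where d: "\<exists>e\<in>EE. d e \<noteq> 0" "\<forall>v\<in>VV. (\<Sum>e\<in>EE. a v e * d e) = 0"
      using insert.IH[OF insert.prems(1)] by blast
    then show ?thesis using True by (intro exI[of _ d]) auto
  next
    case False
    then obtain e0 where e0: "e0 \<in> EE" "a v0 e0 \<noteq> 0" by blast
    define EE' where "EE' = EE - {e0}"
    define a' where "a' v e = a v e - a v e0 * a v0 e / a v0 e0" for v e
    have finE': "finite EE'" using insert.prems(1) unfolding EE'_def by auto
    have "card EE' = card EE - 1" using e0 insert.prems(1) unfolding EE'_def by simp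
    then have "card VV < card EE'" using insert by simp
    then obtain d' where d': "\<exists>e\<in>EE'. d' e \<noteq> 0" "\<forall>v\<in>VV. (\<Sum>e\<in>EE'. a' v e * d' e) = 0"
      using insert.IH[OF finE'] by blast
    define S where "S = (\<Sum>e\<in>EE'. a v0 e * d' e)"
    define d where "d e = (if e = e0 then - S / a v0 e0 else d' e)" for e
    have split: "(\<Sum>e\<in>EE. f e) = f e0 + (\<Sum>e\<in>EE'. f e)" for f :: "'e \<Rightarrow> real"
      unfolding EE'_def using sum.remove[OF insert.prems(1) e0(1)] .
    have dE': "(\<Sum>e\<in>EE'. g e * d e) = (\<Sum>e\<in>EE'. g e * d' e)" for g
      unfolding d_def EE'_def by (intro sum.cong refl) auto
    show ?thesis
    proof (intro exI[of _ d] conjI ballI)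
      show "\<exists>e\<in>EE. d e \<noteq> 0" using d'(1) unfolding d_def EE'_def by auto
      fix v assume "v \<in> insert v0 VV"
      then consider "v = v0" | "v \<in> VV" by auto
      then show "(\<Sum>e\<in>EE. a v e * d e) = 0"
      proof cases
        case 1
        have "(\<Sum>e\<in>EE. a v e * d e) = a v0 e0 * d e0 + S" unfolding split dE' S_def 1 ..
        then show ?thesis using e0(2) unfolding d_def by simp
      next
        case 2
        have "(\<Sum>e\<in>EE'. a' v e * d' e) = (\<Sum>e\<in>EE'. a v e * d' e) - a v e0 / a v0 e0 * S"
          unfolding a'_def S_def by (simp add: sum_subtractf sum_distrib_left algebra_simps sum_divide_distrib)
        then have "(\<Sum>e\<in>EE'. a v e * d' e) = a v e0 / a v0 e0 * S" using d'(2) 2 by simp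
        moreover have "(\<Sum>e\<in>EE. a v e * d e) = a v e0 * d e0 + (\<Sum>e\<in>EE'. a v e * d' e)" unfolding split dE' ..
        ultimately show ?thesis unfolding d_def by simp
      qed
    qed
  qed
qed


definition nontriv :: "'v set \<Rightarrow> 'v set \<Rightarrow> bool" where
  "nontriv VV U \<longleftrightarrow> 2 \<le> card U \<and> 2 \<le> card (VV - U)"

definition bad :: "'v set \<Rightarrow> 'e set \<Rightarrow> ('e \<Rightarrow> 'v set) \<Rightarrow> ('e \<Rightarrow> real) \<Rightarrow> bool" where
  "bad VV EE ends x \<longleftrightarrow> (\<exists>e\<in>EE. x e = 0) \<or>
     (\<exists>U. U \<subseteq> VV \<and> odd (card U) \<and> nontriv VV U \<and> sum x (dl EE ends U) = 1)"

lemma balanced_cut_zero: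
  assumes G: "graph VV EE ends" and ev: "even (card VV)" and d: "\<forall>v\<in>VV. sum d (inc EE ends v) = 0"
    and U: "U \<subseteq> VV" "odd (card U)" "\<not> nontriv VV U"
  shows "sum d (dl EE ends U) = 0"
proof -
  have finV: "finite VV" using G by (simp add: graph_def)
  have cVU: "card (VV - U) = card VV - card U" "card U \<le> card VV" using U finV by (simp_all add: card_Diff_subset finite_subset card_mono)
  show ?thesis
  proof (cases "card U = 1")
    case True
    then obtain v where "U = {v}" by (rule card_1_singletonE)
    then have "v \<in> VV" using U(1) by auto
    then show ?thesis unfolding \<open>U = {v}\<close> dl_single using d by auto
  next
    case False
    then have "card (VV - U) = 1" using U(2,3) cVU ev unfolding nontriv_def by presburger
    then obtain v where v: "VV - U = {v}" by (rule card_1_singletonE)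
    have "dl EE ends U = dl EE ends (VV - U)" using dl_compl[OF G U(1)] by simp
    have "v \<in> VV" using v by auto
    then show ?thesis unfolding \<open>dl EE ends U = dl EE ends (VV - U)\<close> v dl_single using d by auto
  qed
qed

lemma perturb_one:
  assumes G: "graph VV EE ends" and F: "feas VV EE ends x" and pos: "\<forall>e\<in>EE. 0 < x e"
    and nt: "\<forall>U. U \<subseteq> VV \<longrightarrow> odd (card U) \<longrightarrow> nontriv VV U \<longrightarrow> sum x (dl EE ends U) \<noteq> 1"
    and d: "\<forall>v\<in>VV. sum d (inc EE ends v) = 0" and neg: "\<exists>e\<in>EE. d e < 0"
  shows "\<exists>t>0. feas VV EE ends (\<lambda>e. x e + t * d e) \<and> bad VV EE ends (\<lambda>e. x e + t * d e)"
proof -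
  have finV: "finite VV" and finE: "finite EE" using G by (simp_all add: graph_def)
  have ev: "even (card VV)" using feas_even[OF G F] .
  define R1 where "R1 = (\<lambda>e. x e / (- d e)) ` {e\<in>EE. d e < 0}"
  define CU where "CU = {U\<in>Pow VV. odd (card U) \<and> sum d (dl EE ends U) < 0}"
  define R2 where "R2 = (\<lambda>U. (sum x (dl EE ends U) - 1) / (- sum d (dl EE ends U))) ` CU"
  define t where "t = Min (R1 \<union> R2)"
  have finR: "finite (R1 \<union> R2)" unfolding R1_def R2_def CU_def using finE finV by auto
  have neR: "R1 \<union> R2 \<noteq> {}" unfolding R1_def using neg by auto
  have CUnt: "nontriv VV U" if "U \<in> CU" for U
    using that balanced_cut_zero[OF G ev d, of U] unfolding CU_def by auto
  have CUgt: "1 < sum x (dl EE ends U)" if "U \<in> CU" for U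
  proof -
    have "1 \<le> sum x (dl EE ends U)" using F that unfolding feas_def CU_def by auto
    moreover have "sum x (dl EE ends U) \<noteq> 1" using nt CUnt[OF that] that unfolding CU_def by auto
    ultimately show ?thesis by simp
  qed
  have Rpos: "0 < r" if rR: "r \<in> R1 \<union> R2" for r
  proof (cases "r \<in> R1")
    case True
    then obtain e where "e \<in> EE" "d e < 0" "r = x e / (- d e)" unfolding R1_def by auto
    then show ?thesis using pos by (auto intro!: divide_pos_neg)
  next
    case False
    then obtain U where "U \<in> CU" "r = (sum x (dl EE ends U) - 1) / (- sum d (dl EE ends U))" using rR unfolding R2_def by auto
    then show ?thesis using CUgt unfolding CU_def by (auto intro!: divide_pos_neg)
  qed
  have tin: "t \<in> R1 \<union> R2" unfolding t_def using finR neR by (rule Min_in)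
  have tle: "t \<le> r" if "r \<in> R1 \<union> R2" for r unfolding t_def using finR that by (rule Min_le)
  have tpos: "0 < t" using Rpos tin by auto
  define x' where "x' e = x e + t * d e" for e
  have feas': "feas VV EE ends x'"
    unfolding feas_def
  proof (intro conjI ballI allI impI)
    fix e assume e: "e \<in> EE"
    show "0 \<le> x' e"
    proof (cases "d e < 0")
      case True
      then have "t \<le> x e / (- d e)" using tle e unfolding R1_def by auto
      moreover have "0 < - d e" using True by simp
      ultimately have "t * (- d e) \<le> x e" using pos_le_divide_eq by blast
      then show ?thesis unfolding x'_def by simp
    next
      case False then show ?thesis unfolding x'_def using pos e tpos by (simp add: add_nonneg_nonneg less_imp_le)
    qed
  next
    fix v assume "v \<in> VV"
    then show "sum x' (inc EE ends v) = 1" using F d unfolding x'_def feas_def by (simp add: sum.distrib sum_distrib_left[symmetric])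
  next
    fix U assume U: "U \<subseteq> VV" "odd (card U)"
    have x1: "1 \<le> sum x (dl EE ends U)" using F U unfolding feas_def by auto
    have "sum x' (dl EE ends U) = sum x (dl EE ends U) + t * sum d (dl EE ends U)"
      unfolding x'_def by (simp add: sum.distrib sum_distrib_left)
    moreover have "1 \<le> sum x (dl EE ends U) + t * sum d (dl EE ends U)"
    proof (cases "sum d (dl EE ends U) < 0")
      case True
      then have "U \<in> CU" unfolding CU_def using U by auto
      then have "t \<le> (sum x (dl EE ends U) - 1) / (- sum d (dl EE ends U))" using tle unfolding R2_def by auto
      moreover have "0 < - sum d (dl EE ends U)" using True by simp
      ultimately have "t * (- sum d (dl EE ends U)) \<le> sum x (dl EE ends U) - 1" using pos_le_divide_eq by blast
      then show ?thesis by simp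
    next
      case False then show ?thesis using x1 tpos by (simp add: add_increasing2)
    qed
    ultimately show "1 \<le> sum x' (dl EE ends U)" by simp
  qed
  have bad': "bad VV EE ends x'"
  proof (cases "t \<in> R1")
    case True
    then obtain e where e: "e \<in> EE" "d e < 0" "t = x e / (- d e)" unfolding R1_def by auto
    then have "x' e = 0" unfolding x'_def by (simp add: field_simps)
    then show ?thesis unfolding bad_def using e by auto
  next
    case False
    then have "t \<in> R2" using tin by auto
    then obtain U where U: "U \<in> CU" "t = (sum x (dl EE ends U) - 1) / (- sum d (dl EE ends U))" unfolding R2_def by auto
    have dn: "sum d (dl EE ends U) < 0" using U(1) unfolding CU_def by auto
    have "sum x' (dl EE ends U) = sum x (dl EE ends U) + t * sum d (dl EE ends U)"
      unfolding x'_def by (simp add: sum.distrib sum_distrib_left)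
    also have "\<dots> = 1" using U(2) dn by (simp add: field_simps)
    finally show ?thesis unfolding bad_def using U(1) CUnt[OF U(1)] unfolding CU_def by auto
  qed
  show ?thesis using tpos feas' bad' unfolding x'_def by auto
qed


lemma cpm_conv:
  assumes "cpm VV EE ends x1" "cpm VV EE ends x2" "0 \<le> l" "l \<le> 1" "\<forall>e\<in>EE. x e = l * x1 e + (1 - l) * x2 e"
  shows "cpm VV EE ends x"
proof -
  obtain p1 where p1: "\<forall>M. 0 \<le> p1 M" "\<forall>M\<in>Pow EE. p1 M \<noteq> 0 \<longrightarrow> pm VV EE ends M"
    "sum p1 (Pow EE) = 1" "\<forall>e\<in>EE. x1 e = (\<Sum>M\<in>Pow EE. p1 M * of_bool (e\<in>M))" using assms(1) by (rule cpm_get)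
  obtain p2 where p2: "\<forall>M. 0 \<le> p2 M" "\<forall>M\<in>Pow EE. p2 M \<noteq> 0 \<longrightarrow> pm VV EE ends M"
    "sum p2 (Pow EE) = 1" "\<forall>e\<in>EE. x2 e = (\<Sum>M\<in>Pow EE. p2 M * of_bool (e\<in>M))" using assms(2) by (rule cpm_get)
  show ?thesis unfolding cpm_def
  proof (intro exI[of _ "\<lambda>M. l * p1 M + (1 - l) * p2 M"] conjI allI ballI impI)
    fix M show "0 \<le> l * p1 M + (1 - l) * p2 M" using p1(1) p2(1) assms(3,4) by (simp add: add_nonneg_nonneg)
  next
    fix M assume "M \<in> Pow EE" "l * p1 M + (1 - l) * p2 M \<noteq> 0"
    then show "pm VV EE ends M" using p1(2) p2(2) by (cases "p1 M = 0") auto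
  next
    show "(\<Sum>M\<in>Pow EE. l * p1 M + (1 - l) * p2 M) = 1" using p1(3) p2(3)
      by (simp add: sum.distrib sum_distrib_left[symmetric])
  next
    fix e assume "e \<in> EE"
    then show "x e = (\<Sum>M\<in>Pow EE. (l * p1 M + (1 - l) * p2 M) * of_bool (e\<in>M))"
      using p1(4) p2(4) assms(5)
      by (simp add: distrib_right sum.distrib mult.assoc sum_distrib_left[symmetric] del: sum_mult_of_bool_eq)
  qed
qed

lemma cpm_empty:
  assumes "graph {} EE ends"
  shows "cpm {} EE ends x"
proof -
  have "EE = {}" using assms unfolding graph_def by (metis card.empty ex_in_conv subset_empty zero_neq_numeral)
  show ?thesis
    by (rule cpm_push[where Z="{()}" and q="\<lambda>_. 1" and \<phi>="\<lambda>_. {}"]) (use \<open>EE = {}\<close> in \<open>auto simp: pm_def\<close>)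
qed

lemma inc_card_ge2:
  assumes G: "graph VV EE ends" and F: "feas VV EE ends x" and lt1: "\<forall>e\<in>EE. x e < 1" and v: "v \<in> VV"
  shows "2 \<le> card (inc EE ends v)"
proof (rule ccontr)
  assume "\<not> 2 \<le> card (inc EE ends v)"
  then have c: "card (inc EE ends v) = 0 \<or> card (inc EE ends v) = 1" by auto
  have fin: "finite (inc EE ends v)" using G unfolding graph_def inc_def by auto
  have s: "sum x (inc EE ends v) = 1" using F v unfolding feas_def by auto
  show False
  proof (cases "card (inc EE ends v) = 0")
    case True then have "inc EE ends v = {}" using fin by simp
    then show False using s by simp
  next
    case False then have "card (inc EE ends v) = 1" using c by simp
    then obtain e where e: "inc EE ends v = {e}" by (rule card_1_singletonE)
    then have "e \<in> EE" unfolding inc_def by auto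
    then show False using s e lt1 by auto
  qed
qed

lemma half_trick:
  fixes EE :: "'e set"
  assumes G: "graph VV EE ends" and F: "feas VV EE ends x" and deg: "\<forall>v\<in>VV. card (inc EE ends v) = 2"
    and e0: "e0 \<in> EE" "x e0 \<noteq> 1/2"
  shows "\<exists>d::'e\<Rightarrow>real. (\<exists>e\<in>EE. d e \<noteq> 0) \<and> (\<forall>v\<in>VV. sum d (inc EE ends v) = 0)"
proof -
  define a where "a = x e0"
  define d where "d e = (if x e = a then 1 else if x e = 1 - a then -1 else (0::real))" for e
  have "a \<noteq> 1 - a" using e0(2) unfolding a_def by simp
  show ?thesis
  proof (intro exI[of _ d] conjI ballI)
    show "\<exists>e\<in>EE. d e \<noteq> 0" using e0(1) unfolding d_def a_def by (intro bexI[of _ e0]) auto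
    fix v assume v: "v \<in> VV"
    obtain e1 e2 where e12: "inc EE ends v = {e1, e2}" "e1 \<noteq> e2" using deg v unfolding card_2_iff by blast
    have "x e1 + x e2 = 1" using F v e12 unfolding feas_def by auto
    then show "sum d (inc EE ends v) = 0" unfolding e12 using e12(2) \<open>a \<noteq> 1 - a\<close> unfolding d_def by auto
  qed
qed

lemma d_has_neg:
  fixes d :: "'e \<Rightarrow> real"
  assumes G: "graph VV EE ends" and d: "\<forall>v\<in>VV. sum d (inc EE ends v) = 0" and nz: "\<exists>e\<in>EE. d e \<noteq> 0"
  shows "\<exists>e\<in>EE. d e < 0"
proof (rule ccontr)
  assume "\<not> (\<exists>e\<in>EE. d e < 0)"
  then have nn: "\<forall>e\<in>EE. 0 \<le> d e" by auto
  have "2 * sum d EE = 0" using handshake[OF G, of d] d by simp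
  then have "sum d EE = 0" by simp
  moreover have "finite EE" using G by (simp add: graph_def)
  ultimately have "\<forall>e\<in>EE. d e = 0" using nn sum_nonneg_eq_0_iff by blast
  then show False using nz by auto
qed


lemma card2_other:
  assumes "card A = 2" "a \<in> A"
  obtains b where "A = {a,b}" "b \<noteq> a"
proof -
  obtain x y where xy: "A = {x,y}" "x \<noteq> y" using assms(1) unfolding card_2_iff by blast
  show ?thesis
  proof (cases "a = x")
    case True then show ?thesis using that xy by auto
  next
    case False then have "a = y" using assms(2) xy by auto
    then show ?thesis using that xy by auto
  qed
qed

lemma c3_case:
  fixes VV :: "'v set" and EE :: "'e set"
  assumes IH: "\<And>VV' EE' (ends'::'e \<Rightarrow> 'v set) x'. card VV' + card EE' < card VV + card EE \<Longrightarrow>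
      graph VV' EE' ends' \<Longrightarrow> feas VV' EE' ends' x' \<Longrightarrow> cpm VV' EE' ends' x'"
    and G: "graph VV EE ends" and F: "feas VV EE ends x" and deg: "\<forall>v\<in>VV. card (inc EE ends v) = 2"
    and half: "\<forall>e\<in>EE. x e = 1/2" and vV: "v \<in> VV"
  shows "cpm VV EE ends x"
proof -
  have finV: "finite VV" and finE: "finite EE" using G by (simp_all add: graph_def)
  obtain e1 e2 where e12: "inc EE ends v = {e1,e2}" "e1 \<noteq> e2" using deg vV unfolding card_2_iff by blast
  have e12E: "e1 \<in> EE" "e2 \<in> EE" "v \<in> ends e1" "v \<in> ends e2" using e12(1) unfolding inc_def by auto
  obtain u where u: "ends e1 = {v,u}" "u \<noteq> v" using graph_card_ends[OF G e12E(1)] e12E(3) by (rule card2_other)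
  obtain w where w: "ends e2 = {v,w}" "w \<noteq> v" using graph_card_ends[OF G e12E(2)] e12E(4) by (rule card2_other)
  have uV: "u \<in> VV" and wV: "w \<in> VV" using graph_ends_sub[OF G e12E(1)] graph_ends_sub[OF G e12E(2)] u w by auto
  have e1u: "e1 \<in> inc EE ends u" and e2w: "e2 \<in> inc EE ends w" using e12E u w unfolding inc_def by auto
  show ?thesis
  proof (cases "u = w")
    case True
    define R where "R = {v,u}"
    define F where "F = {e1,e2}"
    have incu: "inc EE ends u = {e1,e2}"
    proof -
      have "{e1,e2} \<subseteq> inc EE ends u" using e1u e2w True by auto
      moreover have "finite (inc EE ends u)" using finE unfolding inc_def by auto
      moreover have "card {e1,e2} = card (inc EE ends u)" using deg uV e12(2) by simp
      ultimately show ?thesis using card_subset_eq by metis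
    qed
    have RV: "R \<subseteq> VV" and FE: "F \<subseteq> EE" unfolding R_def F_def using vV uV e12E by auto
    have FR: "\<forall>e\<in>F. ends e \<subseteq> R" unfolding F_def R_def using u w True by auto
    have EFR: "\<forall>e\<in>EE-F. ends e \<inter> R = {}"
    proof
      fix e assume e: "e \<in> EE - F"
      have "v \<notin> ends e" using e e12(1) unfolding F_def inc_def by auto
      moreover have "u \<notin> ends e" using e incu unfolding F_def inc_def by auto
      ultimately show "ends e \<inter> R = {}" unfolding R_def by auto
    qed
    have cardlt: "card (VV - R) + card (EE - F) < card VV + card EE"
    proof -
      have "card (EE - F) < card EE" using FE finE unfolding F_def by (intro psubset_card_mono) auto
      moreover have "card (VV - R) \<le> card VV" using finV by (simp add: card_mono)
      ultimately show ?thesis by simp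
    qed
    have c1: "cpm (VV - R) (EE - F) ends x"
      using IH[OF cardlt comp_graph(1)[OF G RV FE FR EFR] comp_feas[OF G F RV FE FR EFR]] .
    have c2: "cpm R F ends x" unfolding F_def
      by (rule cpm_digon[OF e12(2)]) (use u w True half e12E in \<open>auto simp: R_def\<close>)
    show ?thesis by (rule cpm_union[OF G RV FE FR EFR c1 c2])
  next
    case False
    obtain e0 where e0: "inc EE ends u = {e1,e0}" "e0 \<noteq> e1" using deg uV e1u by (metis card2_other)
    obtain e3 where e3: "inc EE ends w = {e2,e3}" "e3 \<noteq> e2" using deg wV e2w by (metis card2_other)
    have e03E: "e0 \<in> EE" "e3 \<in> EE" "u \<in> ends e0" "w \<in> ends e3" using e0(1) e3(1) unfolding inc_def by auto
    have e0ne2: "e0 \<noteq> e2" using e03E(3) w u False by auto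
    have e3ne1: "e3 \<noteq> e1" using e03E(4) u w False by auto
    define U where "U = {u,v,w}"
    have UV: "U \<subseteq> VV" unfolding U_def using uV vV wV by auto
    have cardU: "card U = 3" unfolding U_def using u(2) w(2) False by auto
    have touch: "e \<in> {e1,e2,e0,e3}" if tt: "e \<in> EE" "ends e \<inter> U \<noteq> {}" for e
    proof -
      obtain y where "y \<in> U" "y \<in> ends e" using tt(2) by auto
      then have "e \<in> inc EE ends u \<or> e \<in> inc EE ends v \<or> e \<in> inc EE ends w" using tt(1) unfolding U_def inc_def by auto
      then show ?thesis using e0(1) e3(1) e12(1) by auto
    qed
    have e1in: "ends e1 \<inter> U = ends e1" "ends e2 \<inter> U = ends e2" unfolding U_def using u w by auto
    have ne03: "e0 \<noteq> e3"
    proof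
      assume eq: "e0 = e3"
      have "dl EE ends U = {}"
      proof -
        have "ends e0 = {u,w}"
        proof -
          obtain s where s: "ends e0 = {u,s}" "s \<noteq> u" using graph_card_ends[OF G e03E(1)] e03E(3) by (rule card2_other)
          then show ?thesis using e03E(4) eq False by auto
        qed
        then have "card (ends e0 \<inter> U) = 2" unfolding U_def using False by auto
        moreover have "card (ends e1 \<inter> U) = 2" "card (ends e2 \<inter> U) = 2"
          unfolding e1in using graph_card_ends[OF G] e12E by auto
        ultimately have "e \<notin> dl EE ends U" for e using touch[of e] eq unfolding dl_def by fastforce
        then show ?thesis by auto
      qed
      moreover have "1 \<le> sum x (dl EE ends U)" using F UV cardU unfolding feas_def by auto
      ultimately show False by simp
    qed
    have dlU: "dl EE ends U = {e0,e3}"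
    proof -
      obtain s where s: "ends e0 = {u,s}" "s \<noteq> u" using graph_card_ends[OF G e03E(1)] e03E(3) by (rule card2_other)
      obtain t where t: "ends e3 = {w,t}" "t \<noteq> w" using graph_card_ends[OF G e03E(2)] e03E(4) by (rule card2_other)
      have "s \<noteq> v" using s e0 e0ne2 e12(1) unfolding inc_def by auto
      moreover have "s \<noteq> w" using s e3 e03E(1) e0ne2 ne03 unfolding inc_def by auto
      moreover have "t \<noteq> v" using t e03E(2) e3 e3ne1 e12(1) unfolding inc_def by auto
      moreover have "t \<noteq> u" using t e0 e03E(2) e3ne1 ne03 unfolding inc_def by auto
      ultimately have "ends e0 \<inter> U = {u}" "ends e3 \<inter> U = {w}" unfolding U_def using s t False u(2) w(2) by auto
      then have "e0 \<in> dl EE ends U" "e3 \<in> dl EE ends U" unfolding dl_def using e03E by auto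
      moreover have "card (ends e1 \<inter> U) = 2" "card (ends e2 \<inter> U) = 2"
        unfolding e1in using graph_card_ends[OF G] e12E by auto
      then have "e \<in> {e0,e3}" if "e \<in> dl EE ends U" for e using that touch[of e] unfolding dl_def by fastforce
      ultimately show ?thesis by auto
    qed
    have ev: "even (card VV)" using feas_even[OF G F] .
    have VU: "VV - U \<subseteq> VV" by auto
    have uVU: "u \<notin> VV - U" unfolding U_def by auto
    have cUV: "card U \<le> card VV" using UV finV by (simp add: card_mono)
    have oddVU: "odd (card (VV - U))" using ev cardU cUV UV finV by (simp add: card_Diff_subset finite_subset)
    have h03: "x e0 = 1/2" "x e3 = 1/2" using half e03E by auto
    have tight': "sum x (dl EE ends (VV - U)) = 1" unfolding dl_compl[OF G UV] dlU using ne03 h03 by simp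
    have VVU: "VV - (VV - U) = U" using UV by auto
    have cardlt: "card (insert u (VV - U)) + card (cE EE ends (VV - U)) < card VV + card EE"
      by (rule contr_card[OF G VU uV uVU]) (simp add: VVU cardU)
    define E2 where "E2 = cE EE ends (VV - U)"
    define en2 where "en2 = cends ends (VV - U) u"
    have c2: "cpm (insert u (VV - U)) E2 en2 x" unfolding E2_def en2_def
      by (rule IH[OF cardlt contr_graph[OF G VU uV uVU] contr_feas[OF G VU uV uVU F oddVU tight']])
    have E2eq: "E2 = EE - {e1,e2}"
    proof -
      have "ends e \<inter> (VV - U) \<noteq> {} \<longleftrightarrow> e \<notin> {e1,e2}" if eE: "e \<in> EE" for e
      proof
        assume "ends e \<inter> (VV - U) \<noteq> {}"
        then show "e \<notin> {e1,e2}" using u w unfolding U_def by auto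
      next
        assume ne: "e \<notin> {e1,e2}"
        show "ends e \<inter> (VV - U) \<noteq> {}"
        proof
          assume "ends e \<inter> (VV - U) = {}"
          then have sub: "ends e \<subseteq> U" using graph_ends_sub[OF G eE] by auto
          moreover have "ends e \<noteq> {}" using graph_card_ends[OF G eE] by auto
          ultimately have "ends e \<inter> U \<noteq> {}" by auto
          then have "e \<in> {e0,e3}" using touch[OF eE] ne by auto
          then have "card (ends e \<inter> U) = 1" using dlU unfolding dl_def by auto
          moreover have "ends e \<inter> U = ends e" using sub by auto
          ultimately show False using graph_card_ends[OF G eE] by simp
        qed
      qed
      then show ?thesis unfolding E2_def cE_def by auto
    qed
    have inc2: "inc E2 en2 y = inc EE ends y" if "y \<in> VV - U" for y
      unfolding E2_def en2_def by (rule contr_inc_U[OF G VU uV uVU that])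
    have inc2u: "inc E2 en2 u = {e0,e3}"
      unfolding E2_def en2_def contr_inc_w[OF G VU uV uVU] dl_compl[OF G UV] dlU ..
    obtain p2 where p2: "\<forall>M. 0 \<le> p2 M" "\<forall>M\<in>Pow E2. p2 M \<noteq> 0 \<longrightarrow> pm (insert u (VV - U)) E2 en2 M"
      "sum p2 (Pow E2) = 1" "\<forall>e\<in>E2. x e = (\<Sum>M\<in>Pow E2. p2 M * of_bool (e\<in>M))"
      using c2 by (rule cpm_get)
    define \<phi> where "\<phi> B = (if e3 \<in> B then insert e1 B else insert e2 B)" for B
    have finE2: "finite E2" using finE E2eq by auto
    have e3E2: "e3 \<in> E2" using E2eq e03E e3ne1 e3(2) by auto
    show ?thesis
    proof (rule cpm_push[where Z="Pow E2" and q=p2 and \<phi>=\<phi>])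
      show "\<forall>z\<in>Pow E2. \<phi> z \<subseteq> EE" using E2eq e12E unfolding \<phi>_def by auto
      show "\<forall>B\<in>Pow E2. p2 B \<noteq> 0 \<longrightarrow> pm VV EE ends (\<phi> B)"
      proof (intro ballI impI)
        fix B assume B: "B \<in> Pow E2" "p2 B \<noteq> 0"
        have pmB: "pm (insert u (VV - U)) E2 en2 B" using p2(2) B by auto
        have BE: "B \<subseteq> EE - {e1,e2}" using B E2eq by auto
        have "card ({e0,e3} \<inter> B) = 1" using pmB inc2u unfolding pm_def by force
        then have ch: "(e3 \<in> B \<and> e0 \<notin> B) \<or> (e3 \<notin> B \<and> e0 \<in> B)" using ne03
          by (cases "e3 \<in> B"; cases "e0 \<in> B") (auto simp: Int_insert_left)
        have "card (inc EE ends y \<inter> \<phi> B) = 1" if yV: "y \<in> VV" for y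
        proof -
          consider "y \<in> VV - U" | "y = u" | "y = v" | "y = w" using yV unfolding U_def by auto
          then show ?thesis
          proof cases
            case 1
            have "e1 \<notin> inc EE ends y" "e2 \<notin> inc EE ends y" using 1 u w unfolding inc_def U_def by auto
            then have "inc EE ends y \<inter> \<phi> B = inc E2 en2 y \<inter> B" using inc2[OF 1] unfolding \<phi>_def by auto
            then show ?thesis using pmB 1 unfolding pm_def by auto
          next
            case 2
            have "inc EE ends y \<inter> \<phi> B = (if e3 \<in> B then {e1} else {e0})"
              unfolding 2 e0(1) \<phi>_def using ch BE e0(2) e12(2) by auto
            then show ?thesis by simp
          next
            case 3
            have "inc EE ends y \<inter> \<phi> B = (if e3 \<in> B then {e1} else {e2})"
              unfolding 3 e12(1) \<phi>_def using BE e12(2) by auto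
            then show ?thesis by simp
          next
            case 4
            have "inc EE ends y \<inter> \<phi> B = (if e3 \<in> B then {e3} else {e2})"
              unfolding 4 e3(1) \<phi>_def using ch BE e3(2) e12(2) e3ne1 by auto
            then show ?thesis by simp
          qed
        qed
        then show "pm VV EE ends (\<phi> B)" using BE e12E unfolding pm_def \<phi>_def by auto
      qed
      show "\<forall>e\<in>EE. x e = (\<Sum>B\<in>Pow E2. p2 B * of_bool (e \<in> \<phi> B))"
      proof
        fix e assume eE: "e \<in> EE"
        consider "e = e1" | "e = e2" | "e \<in> E2" using eE E2eq by auto
        then show "x e = (\<Sum>B\<in>Pow E2. p2 B * of_bool (e \<in> \<phi> B))"
        proof cases
          case 1
          have "(\<Sum>B\<in>Pow E2. p2 B * of_bool (e \<in> \<phi> B)) = (\<Sum>B\<in>Pow E2. p2 B * of_bool (e3 \<in> B))"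
          proof (rule sum.cong[OF refl])
            fix B assume "B \<in> Pow E2"
            then have "e1 \<notin> B" using E2eq by auto
            then show "p2 B * of_bool (e \<in> \<phi> B) = p2 B * of_bool (e3 \<in> B)" unfolding 1 \<phi>_def using e12(2) by auto
          qed
          also have "\<dots> = x e3" using p2(4) e3E2 by simp
          moreover have "x e1 = 1/2" using half e12E by auto
          ultimately show ?thesis using h03 1 by simp
        next
          case 2
          have "(\<Sum>B\<in>Pow E2. p2 B * of_bool (e \<in> \<phi> B)) = (\<Sum>B\<in>Pow E2. p2 B - p2 B * of_bool (e3 \<in> B))"
          proof (rule sum.cong[OF refl])
            fix B assume "B \<in> Pow E2"
            then have "e2 \<notin> B" using E2eq by auto
            then show "p2 B * of_bool (e \<in> \<phi> B) = p2 B - p2 B * of_bool (e3 \<in> B)" unfolding 2 \<phi>_def using e12(2) by auto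
          qed
          also have "\<dots> = 1 - x e3" using p2(3) p2(4) e3E2 by (simp add: sum_subtractf del: sum_mult_of_bool_eq)
          moreover have "x e2 = 1/2" using half e12E by auto
          ultimately show ?thesis using h03 2 by simp
        next
          case 3
          have "e \<noteq> e1" "e \<noteq> e2" using 3 E2eq by auto
          then have "(\<Sum>B\<in>Pow E2. p2 B * of_bool (e \<in> \<phi> B)) = (\<Sum>B\<in>Pow E2. p2 B * of_bool (e \<in> B))"
            unfolding \<phi>_def by (intro sum.cong refl) auto
          then show ?thesis using p2(4) 3 by simp
        qed
      qed
    qed (use finE finE2 p2 in auto)
  qed
qed


lemma x_le_1:
  assumes G: "graph VV EE ends" and F: "feas VV EE ends x" and e: "e \<in> EE"
  shows "x e \<le> 1"
proof -
  obtain a b where ab: "ends e = {a,b}" "a \<noteq> b" "a \<in> VV" "b \<in> VV" using G e by (rule graph_ends2)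
  have ei: "e \<in> inc EE ends a" using e ab unfolding inc_def by auto
  have fin: "finite (inc EE ends a)" using G unfolding graph_def inc_def by auto
  have nn: "\<forall>e\<in>inc EE ends a. 0 \<le> x e" using F unfolding feas_def inc_def by auto
  have "x e \<le> sum x (inc EE ends a)" by (rule member_le_sum[OF ei _ fin]) (use nn in auto)
  then show ?thesis using F ab(3) unfolding feas_def by auto
qed

theorem edmonds:
  fixes VV :: "'v set" and EE :: "'e set"
  shows "graph VV EE ends \<Longrightarrow> feas VV EE ends x \<Longrightarrow> cpm VV EE ends x"
proof (induction "card VV + card EE" arbitrary: VV EE ends x rule: less_induct)
  case less
  note G = less.prems(1) and F = less.prems(2)
  have IH: "\<And>VV' EE' (ends'::'e \<Rightarrow> 'v set) x'. card VV' + card EE' < card VV + card EE \<Longrightarrow>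
      graph VV' EE' ends' \<Longrightarrow> feas VV' EE' ends' x' \<Longrightarrow> cpm VV' EE' ends' x'"
    using less.hyps by blast
  have finV: "finite VV" and finE: "finite EE" using G by (simp_all add: graph_def)
  have ev: "even (card VV)" using feas_even[OF G F] .
  have step: "cpm VV EE ends y" if Fy: "feas VV EE ends y" and By: "bad VV EE ends y" for y
  proof (cases "\<exists>e\<in>EE. y e = 0")
    case True
    then obtain e0 where e0: "e0 \<in> EE" "y e0 = 0" by blast
    have "card (EE - {e0}) < card EE" by (rule card_Diff1_less[OF finE e0(1)])
    then have "card VV + card (EE - {e0}) < card VV + card EE" by simp
    from IH[OF this red_zero_feas[OF G Fy e0(2)]] show ?thesis by (rule red_zero_cpm[of VV EE ends y e0, OF G e0(2)])
  next
    case False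
    then have pos: "\<forall>e\<in>EE. 0 < y e" using Fy unfolding feas_def by (auto simp: less_le)
    obtain U where U: "U \<subseteq> VV" "odd (card U)" "nontriv VV U" "sum y (dl EE ends U) = 1"
      using By False unfolding bad_def by blast
    have cVU: "card (VV - U) = card VV - card U" "card U \<le> card VV" using U(1) finV by (simp_all add: card_Diff_subset finite_subset card_mono)
    have "card (VV - U) \<noteq> 0" using U(3) unfolding nontriv_def by auto
    then have "VV - U \<noteq> {}" by (metis card.empty)
    then obtain w where w: "w \<in> VV" "w \<notin> U" by auto
    have "card U \<noteq> 0" using U(3) unfolding nontriv_def by auto
    then have "U \<noteq> {}" by (metis card.empty)
    then obtain u0 where u0: "u0 \<in> U" by auto
    have u0': "u0 \<in> VV" "u0 \<notin> VV - U" using u0 U(1) by auto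
    have c1: "cpm (insert w U) (cE EE ends U) (cends ends U w) y"
      by (rule IH[OF contr_card[OF G U(1) w] contr_graph[OF G U(1) w] contr_feas[OF G U(1) w Fy U(2) U(4)]])
        (use U(3) in \<open>simp add: nontriv_def\<close>)
    have oddVU: "odd (card (VV - U))" using cVU ev U(2) by simp
    have tight': "sum y (dl EE ends (VV - U)) = 1" using dl_compl[OF G U(1)] U(4) by simp
    have VVU: "VV - (VV - U) = U" using U(1) by auto
    have c2: "cpm (insert u0 (VV - U)) (cE EE ends (VV - U)) (cends ends (VV - U) u0) y"
      by (rule IH[OF contr_card[OF G _ u0'] contr_graph[OF G _ u0'] contr_feas[OF G _ u0' Fy oddVU tight']])
        (use U(3) VVU in \<open>auto simp add: nontriv_def\<close>)
    show ?thesis by (rule glue[OF G pos U(1) w u0 U(4) c1 c2])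
  qed
  show ?case
  proof (cases "bad VV EE ends x")
    case True then show ?thesis using step F by blast
  next
    case False
    have pos: "\<forall>e\<in>EE. 0 < x e" using False F unfolding bad_def feas_def by (auto simp: less_le)
    have nt: "\<forall>U. U \<subseteq> VV \<longrightarrow> odd (card U) \<longrightarrow> nontriv VV U \<longrightarrow> sum x (dl EE ends U) \<noteq> 1"
      using False unfolding bad_def by blast
    show ?thesis
    proof (cases "VV = {}")
      case True then show ?thesis using G cpm_empty by blast
    next
      case Vne: False
      show ?thesis
      proof (cases "\<exists>e0\<in>EE. x e0 = 1")
        case True
        then obtain e0 where e0: "e0 \<in> EE" "x e0 = 1" by blast
        define R where "R = ends e0"
        have RV: "R \<subseteq> VV" using graph_ends_sub[OF G e0(1)] unfolding R_def .
        have FE: "{e0} \<subseteq> EE" using e0 by auto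
        have FR: "\<forall>e\<in>{e0}. ends e \<subseteq> R" unfolding R_def by auto
        have EFR: "\<forall>e\<in>EE-{e0}. ends e \<inter> R = {}"
        proof (intro ballI equals0I)
          fix e y assume e: "e \<in> EE - {e0}" and y: "y \<in> ends e \<inter> R"
          have yV: "y \<in> VV" using y RV by auto
          have sub: "{e, e0} \<subseteq> inc EE ends y" using e y e0 unfolding inc_def R_def by auto
          have fin: "finite (inc EE ends y)" using finE unfolding inc_def by auto
          have nn: "\<forall>b\<in>inc EE ends y - {e,e0}. 0 \<le> x b" using pos unfolding inc_def by (auto intro: less_imp_le)
          have "sum x {e, e0} \<le> sum x (inc EE ends y)" by (rule sum_mono2[OF fin sub]) (use nn in auto)
          moreover have "sum x {e, e0} = x e + 1" using e e0 by simp
          moreover have "sum x (inc EE ends y) = 1" using F yV unfolding feas_def by auto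
          moreover have "0 < x e" using pos e by auto
          ultimately show False by simp
        qed
        have cardlt: "card (VV - R) + card (EE - {e0}) < card VV + card EE"
        proof -
          have "card (EE - {e0}) < card EE" by (rule card_Diff1_less[OF finE e0(1)])
          moreover have "card (VV - R) \<le> card VV" using finV by (simp add: card_mono)
          ultimately show ?thesis by simp
        qed
        have c1: "cpm (VV - R) (EE - {e0}) ends x"
          using IH[OF cardlt comp_graph(1)[OF G RV FE FR EFR] comp_feas[OF G F RV FE FR EFR]] .
        have c2: "cpm R {e0} ends x"
          by (rule cpm_single) (use e0 graph_card_ends[OF G e0(1)] in \<open>auto simp: R_def\<close>)
        show ?thesis by (rule cpm_union[OF G RV FE FR EFR c1 c2])
      next
        case no1: False
        have lt1: "\<forall>e\<in>EE. x e < 1" using no1 x_le_1[OF G F] by (auto simp: less_le)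
        have deg: "\<forall>v\<in>VV. 2 \<le> card (inc EE ends v)" using inc_card_ge2[OF G F lt1] by blast
        have dex: "(\<exists>d::'e\<Rightarrow>real. (\<exists>e\<in>EE. d e \<noteq> 0) \<and> (\<forall>v\<in>VV. sum d (inc EE ends v) = 0)) \<or> cpm VV EE ends x"
        proof (cases "card VV < card EE")
          case True
          obtain d :: "'e \<Rightarrow> real" where d: "\<exists>e\<in>EE. d e \<noteq> 0" "\<forall>v\<in>VV. (\<Sum>e\<in>EE. of_bool (v \<in> ends e) * d e) = 0"
            using kernel_exists[OF finV finE True, of "\<lambda>v e. of_bool (v \<in> ends e)"] by blast
          have "sum d (inc EE ends v) = (\<Sum>e\<in>EE. of_bool (v \<in> ends e) * d e)" for v
            unfolding inc_def using finE by (simp add: Int_def)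
          then show ?thesis using d by auto
        next
          case False
          have hs: "(\<Sum>v\<in>VV. real (card (inc EE ends v))) = 2 * real (card EE)"
            using handshake[OF G, of "\<lambda>_. 1"] by simp
          have "(\<Sum>v\<in>VV. real (card (inc EE ends v)) - 2) = 2 * real (card EE) - 2 * real (card VV)"
            using hs by (simp add: sum_subtractf)
          moreover have "2 * real (card EE) - 2 * real (card VV) \<le> 0" using False by simp
          moreover have "\<forall>v\<in>VV. 0 \<le> real (card (inc EE ends v)) - 2" using deg by auto
          ultimately have "\<forall>v\<in>VV. real (card (inc EE ends v)) - 2 = 0"
            using sum_nonneg_eq_0_iff[OF finV] sum_nonneg[of VV "\<lambda>v. real (card (inc EE ends v)) - 2"]
            by (metis (no_types, lifting) antisym)
          then have deg2: "\<forall>v\<in>VV. card (inc EE ends v) = 2" by auto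
          show ?thesis
          proof (cases "\<exists>e0\<in>EE. x e0 \<noteq> 1/2")
            case True
            then obtain e0 where "e0 \<in> EE" "x e0 \<noteq> 1/2" by blast
            then show ?thesis using half_trick[OF G F deg2] by blast
          next
            case False
            obtain v where "v \<in> VV" using Vne by auto
            then show ?thesis using c3_case[OF IH G F deg2 _ \<open>v\<in>VV\<close>] False by auto
          qed
        qed
        show ?thesis
        proof (cases "cpm VV EE ends x")
          case True then show ?thesis .
        next
          case False
          then obtain d :: "'e \<Rightarrow> real" where d: "\<exists>e\<in>EE. d e \<noteq> 0" "\<forall>v\<in>VV. sum d (inc EE ends v) = 0"
            using dex by blast
          have md: "\<forall>v\<in>VV. sum (\<lambda>e. - d e) (inc EE ends v) = 0" "\<exists>e\<in>EE. - d e \<noteq> 0"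
            using d by (auto simp: sum_negf)
          obtain t1 where t1: "0 < t1" "feas VV EE ends (\<lambda>e. x e + t1 * d e)" "bad VV EE ends (\<lambda>e. x e + t1 * d e)"
            using perturb_one[OF G F pos nt d(2) d_has_neg[OF G d(2) d(1)]] by blast
          obtain t2 where t2: "0 < t2" "feas VV EE ends (\<lambda>e. x e + t2 * - d e)" "bad VV EE ends (\<lambda>e. x e + t2 * - d e)"
            using perturb_one[OF G F pos nt md(1) d_has_neg[OF G md(1) md(2)]] by blast
          have c1: "cpm VV EE ends (\<lambda>e. x e + t1 * d e)" using step t1 by blast
          have c2: "cpm VV EE ends (\<lambda>e. x e + t2 * - d e)" using step t2 by blast
          define l where "l = t2 / (t1 + t2)"
          have l: "0 \<le> l" "l \<le> 1" using t1(1) t2(1) unfolding l_def by auto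
          have "x e = l * (x e + t1 * d e) + (1 - l) * (x e + t2 * - d e)" for e
          proof -
            have nz: "t1 + t2 \<noteq> 0" using t1(1) t2(1) by simp
            have "1 - l = t1 / (t1 + t2)" unfolding l_def using nz by (simp add: field_simps)
            then have "l * (x e + t1 * d e) + (1 - l) * (x e + t2 * - d e) = (t2 * (x e + t1 * d e) + t1 * (x e + t2 * - d e)) / (t1 + t2)"
              unfolding l_def by (simp add: add_divide_distrib)
            also have "\<dots> = x e" using nz by (simp add: field_simps)
            finally show ?thesis by simp
          qed
          then show ?thesis using cpm_conv[OF c1 c2 l] by blast
        qed
      qed
    qed
  qed
qed




definition tsp_cone :: "nat \<Rightarrow> real \<Rightarrow> (nat set \<Rightarrow> real) \<Rightarrow> bool" where
  "tsp_cone n s y \<longleftrightarrow> (\<exists>k (c :: nat \<Rightarrow> real) (t :: nat \<Rightarrow> nat set \<Rightarrow> nat).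
     (\<forall>i < k. 0 \<le> c i \<and> is_tour n (t i)) \<and> (\<Sum>i<k. c i) = s \<and> (\<forall>e. y e = (\<Sum>i<k. c i * real (t i e))))"

lemma TSP_cone: "y \<in> TSP n \<longleftrightarrow> tsp_cone n 1 y"
  unfolding TSP_def tsp_cone_def by auto

lemma sum_lessThan_add: "(\<Sum>i<k1+k2. f i) = (\<Sum>i<k1. f i) + (\<Sum>i<k2. f (k1 + i))" for f :: "nat \<Rightarrow> real"
  by (induction k2) (simp_all add: add.assoc)

lemma cone_zero: "\<forall>e. y e = 0 \<Longrightarrow> tsp_cone n 0 y"
  unfolding tsp_cone_def by (intro exI[of _ 0]) auto

lemma cone_add:
  assumes "tsp_cone n s1 y1" "tsp_cone n s2 y2"
  shows "tsp_cone n (s1 + s2) (\<lambda>e. y1 e + y2 e)"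
proof -
  obtain k1 :: nat and c1 t1 where 1: "\<forall>i < k1. 0 \<le> c1 i \<and> is_tour n (t1 i)" "(\<Sum>i<k1. c1 i) = s1" "\<forall>e. y1 e = (\<Sum>i<k1. c1 i * real (t1 i e))"
    using assms(1) unfolding tsp_cone_def by blast
  obtain k2 :: nat and c2 t2 where 2: "\<forall>i < k2. 0 \<le> c2 i \<and> is_tour n (t2 i)" "(\<Sum>i<k2. c2 i) = s2" "\<forall>e. y2 e = (\<Sum>i<k2. c2 i * real (t2 i e))"
    using assms(2) unfolding tsp_cone_def by blast
  define c where "c i = (if i < k1 then c1 i else c2 (i - k1))" for i
  define t where "t i = (if i < k1 then t1 i else t2 (i - k1))" for i
  show ?thesis unfolding tsp_cone_def
  proof (intro exI[of _ "k1 + k2"] exI[of _ c] exI[of _ t] conjI allI impI)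
    fix i assume "i < k1 + k2"
    then show "0 \<le> c i" "is_tour n (t i)" using 1(1) 2(1) unfolding c_def t_def by auto
  next
    show "(\<Sum>i<k1 + k2. c i) = s1 + s2" unfolding sum_lessThan_add c_def using 1(2) 2(2) by simp
  next
    fix e show "y1 e + y2 e = (\<Sum>i<k1 + k2. c i * real (t i e))"
      unfolding sum_lessThan_add c_def t_def using 1(3) 2(3) by simp
  qed
qed

lemma cone_scale:
  assumes "tsp_cone n s y" "0 \<le> a"
  shows "tsp_cone n (a * s) (\<lambda>e. a * y e)"
proof -
  obtain k :: nat and c t where 1: "\<forall>i < k. 0 \<le> c i \<and> is_tour n (t i)" "(\<Sum>i<k. c i) = s" "\<forall>e. y e = (\<Sum>i<k. c i * real (t i e))"
    using assms(1) unfolding tsp_cone_def by blast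
  show ?thesis unfolding tsp_cone_def
    by (intro exI[of _ k] exI[of _ "\<lambda>i. a * c i"] exI[of _ t])
      (use 1 assms(2) in \<open>auto simp: sum_distrib_left mult.assoc\<close>)
qed

lemma cone_cong: "tsp_cone n s y \<Longrightarrow> \<forall>e. y' e = y e \<Longrightarrow> tsp_cone n s y'"
  unfolding tsp_cone_def by auto

lemma cone_sum:
  assumes "finite S" "\<forall>M\<in>S. 0 \<le> p M" "\<forall>M\<in>S. p M \<noteq> 0 \<longrightarrow> y M \<in> TSP n"
  shows "tsp_cone n (sum p S) (\<lambda>e. \<Sum>M\<in>S. p M * y M e)"
  using assms
proof (induction S rule: finite_induct)
  case empty then show ?case by (simp add: cone_zero)
next
  case (insert M S)
  have ih: "tsp_cone n (sum p S) (\<lambda>e. \<Sum>M\<in>S. p M * y M e)" using insert by auto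
  have one: "tsp_cone n (p M) (\<lambda>e. p M * y M e)"
  proof (cases "p M = 0")
    case True then show ?thesis by (simp add: cone_zero)
  next
    case False
    then have "tsp_cone n 1 (y M)" using insert.prems TSP_cone by auto
    from cone_scale[OF this, of "p M"] show ?thesis using insert.prems by simp
  qed
  show ?case using cone_add[OF one ih] insert.hyps by simp
qed


lemma finite_E: "finite (E n)"
proof -
  have "E n \<subseteq> Pow (V n)" unfolding E_def by auto
  moreover have "finite (Pow (V n))" unfolding V_def by simp
  ultimately show ?thesis by (rule finite_subset)
qed

lemma finite_V: "finite (V n)" unfolding V_def by simp

lemma card_V: "card (V n) = n" unfolding V_def by simp

lemma cut_single: "cut n {i} = {e \<in> E n. i \<in> e}"
  unfolding cut_def by (auto simp: Int_insert_right)

lemma le2_decomp: "(k::nat) \<le> 2 \<Longrightarrow> k = of_bool (k = 1) + 2 * of_bool (k = 2)"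
proof -
  assume "k \<le> 2"
  then have "k = 0 \<or> k = 1 \<or> k = 2" by arith
  then show ?thesis by auto
qed

lemma parity_count:
  fixes U :: "'a set" and F :: "'a set set"
  assumes "finite U" "finite F" "\<forall>e\<in>F. card (e \<inter> U) \<le> 2"
  shows "(\<Sum>v\<in>U. card {e\<in>F. v \<in> e}) = card {e\<in>F. card (e \<inter> U) = 1} + 2 * card {e\<in>F. card (e \<inter> U) = 2}"
proof -
  have "(\<Sum>v\<in>U. card {e\<in>F. v \<in> e}) = (\<Sum>v\<in>U. \<Sum>e\<in>F. of_bool (v \<in> e))"
    using assms(2) by (intro sum.cong refl) (simp add: Int_def)
  also have "\<dots> = (\<Sum>e\<in>F. \<Sum>v\<in>U. of_bool (v \<in> e))" by (rule sum.swap)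
  also have "\<dots> = (\<Sum>e\<in>F. card (e \<inter> U))"
    using assms(1) by (intro sum.cong refl) (simp add: Int_def conj_commute)
  also have "\<dots> = (\<Sum>e\<in>F. of_bool (card (e \<inter> U) = 1) + 2 * of_bool (card (e \<inter> U) = 2))"
  proof (rule sum.cong[OF refl])
    fix e assume "e \<in> F"
    then have "card (e \<inter> U) \<le> 2" using assms(3) by auto
    then show "card (e \<inter> U) = of_bool (card (e \<inter> U) = 1) + 2 * of_bool (card (e \<inter> U) = 2)"
      by (rule le2_decomp)
  qed
  also have "\<dots> = card {e\<in>F. card (e \<inter> U) = 1} + 2 * card {e\<in>F. card (e \<inter> U) = 2}"
    using assms(2) by (simp add: sum.distrib sum_distrib_left[symmetric] Int_def)
  finally show ?thesis .
qed


context
  fixes n :: nat and z :: "nat set \<Rightarrow> real"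
  assumes tt: "two_thirds_uniform n z"
begin

definition Ez :: "nat set set" where "Ez = {e \<in> E n. z e = 2/3}"

lemma Ez_sub: "Ez \<subseteq> E n" unfolding Ez_def by auto
lemma finite_Ez: "finite Ez" using finite_E Ez_sub finite_subset by blast

lemma z_eq: "z e = 2/3 * of_bool (e \<in> Ez)"
proof (cases "e \<in> E n")
  case True
  then have "z e \<in> {0, 2/3}" using tt unfolding two_thirds_uniform_def by auto
  then show ?thesis unfolding Ez_def using True by auto
next
  case False
  then have "z e = 0" using tt unfolding two_thirds_uniform_def SUBT_def by auto
  then show ?thesis unfolding Ez_def using False by auto
qed

lemma sum_z: "finite A \<Longrightarrow> sum z A = 2/3 * card (A \<inter> Ez)"
proof -
  assume A: "finite A"
  have "sum z A = (\<Sum>x\<in>A. 2/3 * of_bool (x \<in> Ez))" by (intro sum.cong refl) (rule z_eq)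
  also have "\<dots> = 2/3 * (\<Sum>x\<in>A. of_bool (x \<in> Ez))" by (rule sum_distrib_left[symmetric])
  also have "(\<Sum>x\<in>A. of_bool (x \<in> Ez) :: real) = real (card (A \<inter> Ez))" using A by simp
  finally show ?thesis .
qed

lemma graph_Ez: "graph (V n) Ez id"
  unfolding graph_def using finite_V finite_Ez Ez_sub unfolding E_def by auto

lemma inc_Ez: "inc Ez id i = cut n {i} \<inter> Ez"
  unfolding inc_def cut_single using Ez_sub by auto

lemma dl_Ez: "dl Ez id U = cut n U \<inter> Ez"
  unfolding dl_def cut_def using Ez_sub by auto

lemma finite_cut: "finite (cut n U)" using finite_E unfolding cut_def by auto

lemma deg3: "i \<in> V n \<Longrightarrow> card (cut n {i} \<inter> Ez) = 3"
proof -
  assume i: "i \<in> V n"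
  have "sum z (cut n {i}) = 2" using tt i unfolding two_thirds_uniform_def SUBT_def by auto
  then have "2/3 * real (card (cut n {i} \<inter> Ez)) = 2" using sum_z[OF finite_cut] by simp
  then have "real (card (cut n {i} \<inter> Ez)) = 3" by simp
  then show ?thesis by simp
qed

lemma n_even: "even n"
proof -
  have "(\<Sum>v\<in>V n. sum (\<lambda>_. 1::real) (inc Ez id v)) = 2 * sum (\<lambda>_. 1) Ez"
    by (rule handshake[OF graph_Ez])
  moreover have "(\<Sum>v\<in>V n. sum (\<lambda>_. 1::real) (inc Ez id v)) = (\<Sum>v\<in>V n. 3)"
    by (intro sum.cong refl) (simp add: inc_Ez deg3)
  ultimately have "3 * real n = 2 * real (card Ez)" by (simp add: card_V)
  then have "3 * n = 2 * card Ez" by linarith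
  then show ?thesis by presburger
qed

lemma feas_Ez: "feas (V n) Ez id (\<lambda>e. z e / 2)"
  unfolding feas_def
proof (intro conjI ballI allI impI)
  fix e assume "e \<in> Ez" then show "0 \<le> z e / 2" unfolding Ez_def by auto
next
  fix i assume i: "i \<in> V n"
  have "sum (\<lambda>e. z e / 2) (inc Ez id i) = sum z (cut n {i} \<inter> Ez) / 2"
    unfolding inc_Ez by (simp add: sum_divide_distrib)
  also have "\<dots> = 1" using sum_z[of "cut n {i} \<inter> Ez"] finite_cut deg3[OF i] by (simp add: Int_assoc)
  finally show "sum (\<lambda>e. z e / 2) (inc Ez id i) = 1" .
next
  fix U assume U: "U \<subseteq> V n" "odd (card U)"
  have "U \<noteq> {}" using U(2) by auto
  moreover have "U \<noteq> V n" using U(2) n_even card_V by auto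
  ultimately have "2 \<le> sum z (cut n U)" using tt U(1) unfolding two_thirds_uniform_def SUBT_def by auto
  then have "2 \<le> 2/3 * real (card (cut n U \<inter> Ez))" using sum_z[OF finite_cut] by simp
  moreover have "sum (\<lambda>e. z e / 2) (dl Ez id U) = 1/3 * real (card (cut n U \<inter> Ez))"
  proof -
    have "sum (\<lambda>e. z e / 2) (dl Ez id U) = sum z (cut n U \<inter> Ez) / 2" unfolding dl_Ez by (simp add: sum_divide_distrib)
    also have "sum z (cut n U \<inter> Ez) = 2/3 * real (card (cut n U \<inter> Ez \<inter> Ez))" using finite_cut by (intro sum_z) auto
    finally show ?thesis by (simp add: Int_assoc id_def)
  qed
  ultimately show "1 \<le> sum (\<lambda>e. z e / 2) (dl Ez id U)" by simp
qed


definition xM :: "nat set set \<Rightarrow> nat set \<Rightarrow> real" where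
  "xM M e = (if e \<in> M then 1 else if e \<in> Ez then 1/2 else 0)"

lemma xM_simp: "xM M e = (if e \<in> M then 1 else if e \<in> Ez then 1/2 else 0)"
  unfolding xM_def ..

lemma sum_xM:
  assumes "M \<subseteq> Ez" "finite A"
  shows "sum (xM M) A = (card (A \<inter> M) + card (A \<inter> Ez)) / 2"
proof -
  have "sum (xM M) A = (\<Sum>e\<in>A. (of_bool (e \<in> M) + of_bool (e \<in> Ez)) / 2)"
    using assms(1) unfolding xM_def by (intro sum.cong refl) auto
  also have "\<dots> = ((\<Sum>e\<in>A. of_bool (e \<in> M)) + (\<Sum>e\<in>A. of_bool (e \<in> Ez))) / 2"
    by (simp only: sum_divide_distrib[symmetric] sum.distrib)
  also have "\<dots> = (card (A \<inter> M) + card (A \<inter> Ez)) / 2" using assms(2) by simp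
  finally show ?thesis .
qed

lemma card_edge_Int: "e \<in> E n \<Longrightarrow> card (e \<inter> U) \<le> 2"
proof -
  assume "e \<in> E n"
  then have "card e = 2" "finite e" unfolding E_def by (auto intro: card_ge_0_finite)
  then show ?thesis by (metis card_mono inf_le1)
qed

lemma cyc:
  assumes pmM: "pm (V n) Ez id M"
  shows "cyclic_point (1/2) n (xM M)"
proof -
  have MEz: "M \<subseteq> Ez" using pmM unfolding pm_def by auto
  have MEn: "M \<subseteq> E n" using MEz Ez_sub by auto
  have incM: "card (cut n {i} \<inter> M) = 1" if i: "i \<in> V n" for i
  proof -
    have "card (inc Ez id i \<inter> M) = 1" using pmM i unfolding pm_def by auto
    moreover have "inc Ez id i \<inter> M = cut n {i} \<inter> M" unfolding inc_Ez using MEz by auto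
    ultimately show ?thesis by simp
  qed
  have subt: "xM M \<in> SUBT n"
    unfolding SUBT_def
  proof (intro CollectI conjI allI ballI impI)
    fix e assume "e \<notin> E n" then show "xM M e = 0" using MEn Ez_sub unfolding xM_def by auto
  next
    fix e show "0 \<le> xM M e" "xM M e \<le> 1" unfolding xM_def by auto
  next
    fix i assume i: "i \<in> V n"
    have "sum (xM M) (cut n {i}) = (card (cut n {i} \<inter> M) + card (cut n {i} \<inter> Ez)) / 2"
      by (rule sum_xM[OF MEz finite_cut])
    then show "sum (xM M) (cut n {i}) = 2" using incM[OF i] deg3[OF i] by simp
  next
    fix U assume U: "U \<noteq> {} \<and> U \<subset> V n"
    have "2 \<le> sum z (cut n U)" using tt U unfolding two_thirds_uniform_def SUBT_def by auto
    then have k3: "3 \<le> card (cut n U \<inter> Ez)" using sum_z[OF finite_cut] by simp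
    have sx: "sum (xM M) (cut n U) = (card (cut n U \<inter> M) + card (cut n U \<inter> Ez)) / 2"
      by (rule sum_xM[OF MEz finite_cut])
    have finU: "finite U" using U finite_V finite_subset by auto
    have UV: "U \<subseteq> V n" using U by auto
    show "2 \<le> sum (xM M) (cut n U)"
    proof (cases "card (cut n U \<inter> Ez) = 3")
      case False
      then have "4 \<le> card (cut n U \<inter> Ez)" using k3 by simp
      then show ?thesis using sx by simp
    next
      case True
      have cEz: "{e\<in>Ez. card (e \<inter> U) = 1} = cut n U \<inter> Ez" unfolding cut_def using Ez_sub by auto
      have cM: "{e\<in>M. card (e \<inter> U) = 1} = cut n U \<inter> M" unfolding cut_def using MEn by auto
      have pE: "(\<Sum>v\<in>U. card {e\<in>Ez. v \<in> e}) = card {e\<in>Ez. card (e \<inter> U) = 1} + 2 * card {e\<in>Ez. card (e \<inter> U) = 2}"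
        by (rule parity_count[OF finU finite_Ez]) (use Ez_sub card_edge_Int in auto)
      have pM: "(\<Sum>v\<in>U. card {e\<in>M. v \<in> e}) = card {e\<in>M. card (e \<inter> U) = 1} + 2 * card {e\<in>M. card (e \<inter> U) = 2}"
        by (rule parity_count[OF finU finite_subset[OF MEz finite_Ez]]) (use MEn card_edge_Int in auto)
      have "(\<Sum>v\<in>U. card {e\<in>Ez. v \<in> e}) = (\<Sum>v\<in>U. 3)"
      proof (rule sum.cong[OF refl])
        fix v assume "v \<in> U"
        then have "v \<in> V n" using UV by auto
        moreover have "{e\<in>Ez. v \<in> e} = cut n {v} \<inter> Ez" unfolding cut_single using Ez_sub by auto
        ultimately show "card {e\<in>Ez. v \<in> e} = 3" using deg3 by simp
      qed
      then have "3 * card U = 3 + 2 * card {e\<in>Ez. card (e \<inter> U) = 2}" using pE cEz True by simp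
      then have oddU: "odd (card U)" by presburger
      have "(\<Sum>v\<in>U. card {e\<in>M. v \<in> e}) = (\<Sum>v\<in>U. 1)"
      proof (rule sum.cong[OF refl])
        fix v assume "v \<in> U"
        then have "v \<in> V n" using UV by auto
        moreover have "{e\<in>M. v \<in> e} = cut n {v} \<inter> M" unfolding cut_single using MEn by auto
        ultimately show "card {e\<in>M. v \<in> e} = 1" using incM by simp
      qed
      then have "card U = card (cut n U \<inter> M) + 2 * card {e\<in>M. card (e \<inter> U) = 2}" using pM cM by simp
      then have "odd (card (cut n U \<inter> M))" using oddU by presburger
      then have "1 \<le> card (cut n U \<inter> M)" by presburger
      then show ?thesis using sx True by simp
    qed
  qed
  show ?thesis unfolding cyclic_point_def
  proof (intro conjI ballI)
    show "xM M \<in> SUBT n" by (rule subt)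
  next
    fix e assume "e \<in> E n" then show "xM M e \<in> {0, 1/2, 1 - 1/2, 1}" unfolding xM_def by auto
  next
    fix i assume i: "i \<in> V n"
    have "{e \<in> cut n {i}. 0 < xM M e} = cut n {i} \<inter> Ez" using MEz unfolding xM_def by auto
    then show "card {e \<in> cut n {i}. 0 < xM M e} \<le> 3" using deg3[OF i] by simp
  next
    fix i assume i: "i \<in> V n"
    obtain e where "cut n {i} \<inter> M = {e}" using incM[OF i] by (rule card_1_singletonE)
    then show "\<exists>e\<in>cut n {i}. xM M e = 1" unfolding xM_def by auto
  qed
qed

end


theorem mainTheorem5:
  fixes \<epsilon> \<delta> :: real
  assumes "\<epsilon> \<ge> 0" and "\<delta> \<ge> 0"
  assumes hyp: "\<And>n x. n \<ge> 3 \<Longrightarrow> cyclic_point (1/2) n x \<Longrightarrow>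
      (\<lambda>e. if x e = 1 then 3/2 - \<epsilon>
            else if 0 < x e \<and> x e < 1 then 3/4 - \<delta> else 0) \<in> TSP n"
  shows "\<forall>n \<ge> 3. \<forall>z. two_thirds_uniform n z \<longrightarrow>
      (\<lambda>e. (3/2 - \<epsilon>/2 - \<delta>) * z e) \<in> TSP n"
proof (intro allI impI)
  fix n :: nat and z assume n3: "3 \<le> n" and tt: "two_thirds_uniform n z"
  let ?Ez = "Ez n z"
  have "cpm (V n) ?Ez id (\<lambda>e. z e / 2)" by (rule edmonds[OF graph_Ez[OF tt] feas_Ez[OF tt]])
  then obtain p where p: "\<forall>M. 0 \<le> p M" "\<forall>M\<in>Pow ?Ez. p M \<noteq> 0 \<longrightarrow> pm (V n) ?Ez id M"
    "sum p (Pow ?Ez) = 1" "\<forall>e\<in>?Ez. z e / 2 = (\<Sum>M\<in>Pow ?Ez. p M * of_bool (e\<in>M))"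
    by (rule cpm_get)
  define y where "y M = (\<lambda>e. if xM n z M e = 1 then 3/2 - \<epsilon>
            else if 0 < xM n z M e \<and> xM n z M e < 1 then 3/4 - \<delta> else 0)" for M
  have yT: "\<forall>M\<in>Pow ?Ez. p M \<noteq> 0 \<longrightarrow> y M \<in> TSP n"
    using p(2) cyc[OF tt] hyp[OF n3] unfolding y_def by blast
  have fin: "finite (Pow ?Ez)" using finite_Ez[OF tt] by simp
  have cone: "tsp_cone n 1 (\<lambda>e. \<Sum>M\<in>Pow ?Ez. p M * y M e)"
    using cone_sum[OF fin _ yT] p(1) p(3) by auto
  have yval: "y M e = (3/4 - \<delta>) * of_bool (e \<in> ?Ez) + (3/4 - \<epsilon> + \<delta>) * of_bool (e \<in> M)" if "M \<in> Pow ?Ez" for M e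
    using that unfolding y_def xM_simp[OF tt] by auto
  have "(3/2 - \<epsilon>/2 - \<delta>) * z e = (\<Sum>M\<in>Pow ?Ez. p M * y M e)" for e
  proof -
    have "(\<Sum>M\<in>Pow ?Ez. p M * y M e)
        = (\<Sum>M\<in>Pow ?Ez. (3/4 - \<delta>) * of_bool (e \<in> ?Ez) * p M + (3/4 - \<epsilon> + \<delta>) * (p M * of_bool (e \<in> M)))"
    proof (rule sum.cong[OF refl])
      fix M assume "M \<in> Pow ?Ez"
      show "p M * y M e = (3/4 - \<delta>) * of_bool (e \<in> ?Ez) * p M + (3/4 - \<epsilon> + \<delta>) * (p M * of_bool (e \<in> M))"
        unfolding yval[OF \<open>M \<in> Pow ?Ez\<close>] by (simp add: algebra_simps del: of_bool_eq)
    qed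
    also have "\<dots> = (3/4 - \<delta>) * of_bool (e \<in> ?Ez) * sum p (Pow ?Ez) + (3/4 - \<epsilon> + \<delta>) * (\<Sum>M\<in>Pow ?Ez. p M * of_bool (e \<in> M))"
      by (simp only: sum.distrib sum_distrib_left)
    finally have eq: "(\<Sum>M\<in>Pow ?Ez. p M * y M e) = (3/4 - \<delta>) * of_bool (e \<in> ?Ez) + (3/4 - \<epsilon> + \<delta>) * (\<Sum>M\<in>Pow ?Ez. p M * of_bool (e \<in> M))"
      using p(3) by simp
    show ?thesis
    proof (cases "e \<in> ?Ez")
      case True
      then have "z e = 2/3" using z_eq[OF tt, of e] by simp
      moreover have "(\<Sum>M\<in>Pow ?Ez. p M * of_bool (e \<in> M)) = 1/3" 
      proof -
        have "(\<Sum>M\<in>Pow ?Ez. p M * of_bool (e \<in> M)) = z e / 2" using p(4) True by simp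
        then show ?thesis using \<open>z e = 2/3\<close> by simp
      qed
      ultimately have "(\<Sum>M\<in>Pow ?Ez. p M * y M e) = (3/4 - \<delta>) + (3/4 - \<epsilon> + \<delta>) * (1/3)"
        and ze: "z e = 2/3" using eq True by simp_all
      then show ?thesis unfolding ze by (simp add: field_simps)
    next
      case False
      have "(\<Sum>M\<in>Pow ?Ez. p M * of_bool (e \<in> M)) = 0" using False by (intro sum.neutral) auto
      moreover have "z e = 0" using z_eq[OF tt, of e] False by simp
      ultimately show ?thesis using eq False by simp
    qed
  qed
  then show "(\<lambda>e. (3/2 - \<epsilon>/2 - \<delta>) * z e) \<in> TSP n"
    unfolding TSP_cone using cone_cong[OF cone] by auto
qed


end
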